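(* Let $h_1,h_2,h_3$ be integers with $p\nmid h_1h_2h_3$, let $e_1,e_2,e_3\in\{-1,1\}$, and assume $k_1,k_2,k_3>0$ with $k_1+k_2+k_3<d$. For $i=1,2,3$ let $\alpha_i\in\mathbb{F}_{q^{k_i}}$ have minimal polynomial $g_i$ over $\mathbb{F}_q$ of degree $u_i$. Then \[m:=\left\langle\psi(e_1h_1\mathrm{tr}_{k_1}f(\alpha_1)+e_2h_2\mathrm{tr}_{k_2}f(\alpha_2)+e_3h_3\mathrm{tr}_{k_3}f(\alpha_3))\right\rangle\] equals $1$ in each of the following cases: (i) $g_1=g_2=g_3$, $p\mid\frac{e_1h_1k_1+e_2h_2k_2+e_3h_3k_3}{u_1}$ and $p\nmid\frac{k_1k_2k_3}{u_1u_2u_3}$; (ii) for some permutation $(j_1,j_2,j_3)$ of $(1,2,3)$: $g_{j_1}=g_{j_2}$, $p\mid\frac{e_{j_1}h_{j_1}k_{j_1}+e_{j_2}h_{j_2}k_{j_2}}{u_{j_1}}$, $p\nmid\frac{k_{j_1}k_{j_2}}{u_{j_1}u_{j_2}}$, and $p\mid\frac{k_{j_3}}{u_{j_3}}$; (iii) $p\mid\frac{k_i}{u_i}$ for $i=1,2,3$. Otherwise $m=0$.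
   Context: $p$ odd prime, $q$ a power of $p$, $d$ a positive integer not divisible by $p$. $\mathrm{tr}_n:\mathbb{F}_{q^n}\to\mathbb{F}_p$ absolute trace; $\psi$ a fixed nontrivial additive character of $\mathbb{F}_p$. $\langle\cdot\rangle$ is the uniform average over $f\in\mathcal{F}_d'=\{a_dX^d+\dots+a_0\in\mathbb{F}_q[X]:a_d\ne0,\ a_{pk}=0\text{ for }1\le k\le\lfloor d/p\rfloor\}$. *)

theory Defs
  imports Complex_Main "HOL-Computational_Algebra.Polynomial"
begin

(* The subfield F_m = {x. x^m = x} of an ambient finite field (m a power of the characteristic). *)
definition subfield_of_card :: "nat \<Rightarrow> 'a::field set" where
  "subfield_of_card m = {x. x ^ m = x}"

(* Absolute trace tr_n : F_{q^n} -> F_p, where q = p^r:  tr_n(x) = sum_{j < r n} x^(p^j). *)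
definition abs_tr :: "nat \<Rightarrow> nat \<Rightarrow> nat \<Rightarrow> 'a::field \<Rightarrow> 'a" where
  "abs_tr p r n x = (\<Sum>j < r * n. x ^ (p ^ j))"

definition minpoly_over :: "'a::field set \<Rightarrow> 'a \<Rightarrow> 'a poly" where
  "minpoly_over F \<alpha> = (THE g. lead_coeff g = 1 \<and> (\<forall>i. coeff g i \<in> F) \<and> poly g \<alpha> = 0 \<and>
      (\<forall>h. h \<noteq> 0 \<and> (\<forall>i. coeff h i \<in> F) \<and> poly h \<alpha> = 0 \<longrightarrow> degree g \<le> degree h))"

definition Fd' :: "nat \<Rightarrow> nat \<Rightarrow> nat \<Rightarrow> 'a::field poly set" where
  "Fd' p q d = {f. degree f = d \<and> (\<forall>i. coeff f i \<in> subfield_of_card q) \<and>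
      (\<forall>k. 1 \<le> k \<and> k \<le> d div p \<longrightarrow> coeff f (p * k) = 0)}"

definition avg_Fd' :: "nat \<Rightarrow> nat \<Rightarrow> nat \<Rightarrow> ('a::field poly \<Rightarrow> complex) \<Rightarrow> complex" where
  "avg_Fd' p q d X = (\<Sum>f \<in> Fd' p q d. X f) / of_nat (card (Fd' p q d :: 'a poly set))"

definition nontriv_add_char :: "nat \<Rightarrow> ('a::field \<Rightarrow> complex) \<Rightarrow> bool" where
  "nontriv_add_char p \<psi> \<longleftrightarrow>
     (\<forall>x \<in> subfield_of_card p. \<psi> x \<noteq> 0) \<and>
     (\<forall>x \<in> subfield_of_card p. \<forall>y \<in> subfield_of_card p. \<psi> (x + y) = \<psi> x * \<psi> y) \<and>
     (\<exists>x \<in> subfield_of_card p. \<psi> x \<noteq> 1)"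

end

theory Submission
  imports Defs
begin


lemma char_eq_p:
  fixes dummy :: "'a::{finite,field}"
  assumes "prime p" "card (UNIV::'a set) = p ^ N"
  shows "CHAR('a) = p"
proof -
  have pos: "CHAR('a) > 0" by (rule finite_imp_CHAR_pos) simp
  have pr: "prime CHAR('a)" using prime_CHAR_semidom[OF pos] .
  have "(\<Sum>x\<in>(UNIV::'a set). x + 1) = (\<Sum>x\<in>(UNIV::'a set). x)"
    by (rule sum.reindex_bij_witness[of _ "\<lambda>x. x - 1" "\<lambda>x. x + 1"]) auto
  hence "of_nat (card (UNIV::'a set)) = (0::'a)" by (simp add: sum.distrib)
  hence "CHAR('a) dvd p ^ N" using assms(2) by (metis of_nat_eq_0_iff_char_dvd)
  hence "CHAR('a) dvd p" using pr prime_dvd_power by blast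
  thus ?thesis using pr assms(1) primes_dvd_imp_eq by blast
qed

lemma minus_pow_char:
  fixes x y :: "'b::comm_ring_1"
  assumes "CHAR('b) = p" "prime p"
  shows "(- x) ^ (p ^ s) = - (x ^ (p ^ s))"
proof (induction s)
  case 0 then show ?case by simp
next
  case (Suc s)
  have "(- x) ^ (p ^ Suc s) = ((- x) ^ (p ^ s)) ^ p" by (simp add: power_mult[symmetric] mult.commute)
  also have "\<dots> = (- (x ^ (p ^ s))) ^ p" using Suc by simp
  also have "\<dots> = - ((x ^ (p ^ s)) ^ p)" using minus_power_prime_CHAR[of p "x ^ (p ^ s)"] assms by simp
  also have "\<dots> = - (x ^ (p ^ Suc s))" by (simp add: power_mult[symmetric] mult.commute)
  finally show ?case .
qed

lemma add_pow_char:
  fixes x y :: "'b::comm_ring_1"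
  assumes "CHAR('b) = p" "prime p"
  shows "(x + y) ^ (p ^ s) = x ^ (p ^ s) + y ^ (p ^ s)"
  using freshmans_dream'[of "p ^ s" s x y] assms by simp

lemma diff_pow_char:
  fixes x y :: "'b::comm_ring_1"
  assumes "CHAR('b) = p" "prime p"
  shows "(x - y) ^ (p ^ s) = x ^ (p ^ s) - y ^ (p ^ s)"
  using add_pow_char[OF assms, of x "-y" s] minus_pow_char[OF assms, of y s] by simp

lemma sum_pow_char:
  fixes f :: "'c \<Rightarrow> 'b::comm_ring_1"
  assumes "CHAR('b) = p" "prime p"
  shows "(sum f A) ^ (p ^ s) = (\<Sum>i\<in>A. f i ^ (p ^ s))"
  using freshmans_dream_sum'[of "p ^ s" s f A] assms by simp

lemma pow_card_same:
  fixes x :: "'a :: {finite,field}"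
  shows   "x ^ card (UNIV :: 'a set) = x"
proof (cases "x = 0")
  case False
  have "x * (\<Prod>y\<in>UNIV-{0}. x * y) = x * x ^ (card (UNIV :: 'a set) - 1) * \<Prod>(UNIV-{0})"
    by (simp add: prod.distrib mult_ac)
  also have "x * x ^ (card (UNIV :: 'a set) - 1) = x ^ Suc (card (UNIV :: 'a set) - 1)"
    by (subst power_Suc) auto
  also have "Suc (card (UNIV :: 'a set) - 1) = card (UNIV :: 'a set)"
    using finite_UNIV_card_ge_0[where ?'a = 'a] by simp
  also have "(\<Prod>y\<in>UNIV-{0}. x * y) = (\<Prod>y\<in>UNIV-{0}. y)"
    by (rule prod.reindex_bij_witness[of _ "\<lambda>y. y / x" "\<lambda>y. x * y"]) (use False in auto)
  finally show ?thesis
    by simp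
qed (use finite_UNIV_card_ge_0[where ?'a = 'a] in auto)

lemma pow_card_pow_same:
  fixes x :: "'a :: {finite,field}"
  shows "x ^ (card (UNIV :: 'a set) ^ t) = x"
  by (induction t) (simp_all add: pow_card_same power_mult)

lemma pow_inj_char:
  fixes x y :: "'a::field"
  assumes "CHAR('a) = p" "prime p" "x ^ (p ^ s) = y ^ (p ^ s)"
  shows "x = y"
proof -
  have "(x - y) ^ (p ^ s) = 0" using diff_pow_char[OF assms(1,2)] assms(3) by simp
  thus ?thesis by simp
qed



lemma poly_map_frob:
  fixes f :: "'a::field poly"
  assumes "CHAR('a) = p" "prime p"
  shows "poly (map_poly (\<lambda>c. c ^ (p ^ s)) f) (x ^ (p ^ s)) = (poly f x) ^ (p ^ s)"
proof -
  have p0: "p > 0" using assms(2) prime_gt_0_nat by blast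
  have deg: "degree (map_poly (\<lambda>c. c ^ (p ^ s)) f) = degree f"
    by (rule degree_map_poly) simp
  have "(poly f x) ^ (p ^ s) = (\<Sum>i\<le>degree f. (coeff f i * x ^ i) ^ (p ^ s))"
    unfolding poly_altdef by (rule sum_pow_char[OF assms])
  also have "\<dots> = (\<Sum>i\<le>degree f. coeff f i ^ (p ^ s) * (x ^ (p ^ s)) ^ i)"
    by (intro sum.cong refl) (simp add: power_mult_distrib power_mult[symmetric] mult.commute)
  also have "\<dots> = poly (map_poly (\<lambda>c. c ^ (p ^ s)) f) (x ^ (p ^ s))"
    unfolding poly_altdef deg using p0 by (simp add: coeff_map_poly)
  finally show ?thesis by simp
qed

lemma map_frob_id:
  fixes f :: "'a::field poly"
  assumes "\<forall>i. coeff f i ^ (p ^ s) = coeff f i" "p > 0"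
  shows "map_poly (\<lambda>c. c ^ (p ^ s)) f = f"
  by (rule poly_eqI) (use assms in \<open>simp add: coeff_map_poly\<close>)

lemma poly_frob:
  fixes f :: "'a::field poly"
  assumes "CHAR('a) = p" "prime p" "\<forall>i. coeff f i ^ (p ^ s) = coeff f i"
  shows "poly f (x ^ (p ^ s)) = (poly f x) ^ (p ^ s)"
proof -
  have "map_poly (\<lambda>c. c ^ (p ^ s)) f = f"
    using map_frob_id[OF assms(3)] assms(2) prime_gt_0_nat by blast
  thus ?thesis using poly_map_frob[OF assms(1,2), of s f x] by simp
qed

lemma interp_exists:
  fixes A :: "'a::field set"
  assumes "finite A"
  shows "\<exists>L. (\<forall>a\<in>A. poly L a = \<phi> a) \<and> (A \<noteq> {} \<longrightarrow> degree L < card A)"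
  using assms
proof (induction A rule: finite_induct)
  case empty then show ?case by auto
next
  case (insert a A)
  show ?case
  proof (cases "A = {}")
    case True
    then show ?thesis by (intro exI[of _ "[:\<phi> a:]"]) auto
  next
    case False
    from insert.IH False obtain L where L: "\<forall>x\<in>A. poly L x = \<phi> x" "degree L < card A" by blast
    define M where "M = (\<Prod>x\<in>A. [:-x, 1:])"
    have degM: "degree M = card A" unfolding M_def
      by (subst degree_prod_eq_sum_degree) (auto)
    have Mz: "poly M x = 0" if "x \<in> A" for x
      unfolding M_def poly_prod using that insert.hyps(1) by (auto intro!: prod_zero)
    have Ma: "poly M a \<noteq> 0" unfolding M_def poly_prod using insert.hyps by auto
    define L' where "L' = L + smult ((\<phi> a - poly L a) / poly M a) M"
    have "poly L' x = \<phi> x" if "x \<in> insert a A" for x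
      using that L Mz Ma by (auto simp: L'_def)
    moreover have "degree L' < card (insert a A)"
    proof -
      have "degree L' \<le> max (degree L) (degree (smult ((\<phi> a - poly L a) / poly M a) M))"
        unfolding L'_def by (rule degree_add_le_max)
      also have "\<dots> \<le> card A" using L degM by (auto intro: order.trans[OF degree_smult_le])
      finally show ?thesis using insert.hyps by simp
    qed
    ultimately show ?thesis by blast
  qed
qed

lemma equiv_interp:
  fixes B :: "'a::{finite,field} set"
  assumes "CHAR('a) = p" "prime p" "B \<noteq> {}"
    and stab: "\<forall>b\<in>B. b ^ (p ^ s) \<in> B"
    and eqv: "\<forall>b\<in>B. \<phi> (b ^ (p ^ s)) = (\<phi> b) ^ (p ^ s)"
  shows "\<exists>L. (\<forall>i. coeff L i ^ (p ^ s) = coeff L i) \<and> (\<forall>b\<in>B. poly L b = \<phi> b) \<and> degree L < card B"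
proof -
  have p0: "p > 0" using assms(2) prime_gt_0_nat by blast
  obtain L where L: "\<forall>b\<in>B. poly L b = \<phi> b" "degree L < card B"
    using interp_exists[of B \<phi>] assms(3) by auto
  define fr where "fr = (\<lambda>c::'a. c ^ (p ^ s))"
  have inj: "inj_on fr B" unfolding fr_def using pow_inj_char[OF assms(1,2)] by (auto intro: inj_onI)
  have img: "fr ` B = B"
    by (rule endo_inj_surj) (use stab inj in \<open>auto simp: fr_def\<close>)
  define L' where "L' = map_poly fr L"
  have degL': "degree L' = degree L" unfolding L'_def fr_def by (rule degree_map_poly) simp
  have "poly L' b = \<phi> b" if "b \<in> B" for b
  proof -
    from that img obtain b' where b': "b' \<in> B" "b = fr b'" by auto
    have "poly L' b = (poly L b') ^ (p ^ s)"
      unfolding L'_def b' fr_def by (rule poly_map_frob[OF assms(1,2)])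
    also have "\<dots> = \<phi> b" using L b' eqv by (simp add: fr_def)
    finally show ?thesis .
  qed
  hence "L' = L" by (intro poly_eqI_degree[of B]) (use L degL' in auto)
  hence "coeff L i ^ (p ^ s) = coeff L i" for i
  proof -
    have "coeff L' i = fr (coeff L i)" unfolding L'_def by (rule coeff_map_poly) (use p0 in \<open>simp add: fr_def\<close>)
    thus ?thesis using \<open>L' = L\<close> by (simp add: fr_def)
  qed
  thus ?thesis using L by blast
qed



definition olen :: "nat \<Rightarrow> 'a::field \<Rightarrow> nat" where
  "olen Q a = (LEAST l. l > 0 \<and> a ^ (Q ^ l) = a)"

definition orb :: "nat \<Rightarrow> 'a::field \<Rightarrow> 'a set" where
  "orb Q a = range (\<lambda>s. a ^ (Q ^ s))"

lemma powQ_add: "(a::'a::field) ^ (Q ^ (s + t)) = (a ^ (Q ^ s)) ^ (Q ^ t)"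
  by (simp add: power_add power_mult)

lemma powQ_inj:
  assumes "inj (\<lambda>x::'a::field. x ^ Q)"
  shows "inj (\<lambda>x::'a. x ^ (Q ^ s))"
proof (induction s)
  case 0 then show ?case by (simp add: inj_on_def)
next
  case (Suc s)
  have "(\<lambda>x::'a. x ^ (Q ^ Suc s)) = (\<lambda>x. x ^ (Q ^ s)) \<circ> (\<lambda>x. x ^ Q)"
    by (auto simp: power_mult[symmetric] mult.commute)
  thus ?case using Suc assms by (simp add: inj_compose)
qed

context
  fixes Q K :: nat and a :: "'a::field"
  assumes inj: "inj (\<lambda>x::'a. x ^ Q)" and per: "a ^ (Q ^ K) = a" and K0: "K > 0"
begin

lemma olen: "olen Q a > 0" "a ^ (Q ^ olen Q a) = a"
  using LeastI[of "\<lambda>l. l > 0 \<and> a ^ (Q ^ l) = a" K] per K0 unfolding olen_def by auto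

lemma olen_mult: "a ^ (Q ^ (olen Q a * t)) = a"
proof (induction t)
  case 0 then show ?case by simp
next
  case (Suc t)
  have "a ^ (Q ^ (olen Q a * Suc t)) = (a ^ (Q ^ (olen Q a * t))) ^ (Q ^ olen Q a)"
    by (metis powQ_add mult_Suc_right add.commute)
  thus ?case using Suc olen by simp
qed

lemma olen_mod: "a ^ (Q ^ s) = a ^ (Q ^ (s mod olen Q a))"
proof -
  have "s = olen Q a * (s div olen Q a) + s mod olen Q a" by simp
  hence "a ^ (Q ^ s) = (a ^ (Q ^ (olen Q a * (s div olen Q a)))) ^ (Q ^ (s mod olen Q a))"
    by (metis powQ_add)
  thus ?thesis using olen_mult by simp
qed

lemma olen_lt_eq:
  assumes "s < olen Q a" "t < olen Q a" "a ^ (Q ^ s) = a ^ (Q ^ t)"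
  shows "s = t"
proof (rule ccontr)
  assume ne: "s \<noteq> t"
  have main: False if "s' < t'" "t' < olen Q a" "a ^ (Q ^ s') = a ^ (Q ^ t')" for s' t'
  proof -
    have "a ^ (Q ^ t') = (a ^ (Q ^ (t' - s'))) ^ (Q ^ s')"
      using powQ_add[of a Q "t' - s'" s'] that(1) by simp
    hence "(a ^ (Q ^ (t' - s'))) ^ (Q ^ s') = a ^ (Q ^ s')" using that(3) by simp
    hence "a ^ (Q ^ (t' - s')) = a" using powQ_inj[OF inj, of s'] by (auto dest: injD)
    moreover have "t' - s' > 0" "t' - s' < olen Q a" using that by auto
    ultimately show False using not_less_Least[of "t' - s'" "\<lambda>l. l > 0 \<and> a ^ (Q ^ l) = a"]
      unfolding olen_def by auto
  qed
  show False
  proof (cases "s < t")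
    case True then show ?thesis using main[of s t] assms by auto
  next
    case False then show ?thesis using main[of t s] assms ne by auto
  qed
qed

lemma olen_eq_mod:
  assumes "a ^ (Q ^ s) = a ^ (Q ^ t)"
  shows "s mod olen Q a = t mod olen Q a"
  using olen_lt_eq[of "s mod olen Q a" "t mod olen Q a"] olen(1) olen_mod[of s] olen_mod[of t] assms
  by simp

lemma olen_dvd:
  assumes "a ^ (Q ^ k) = a"
  shows "olen Q a dvd k"
  using olen_eq_mod[of k 0] assms by (simp add: mod_eq_0_iff_dvd)

lemma orb_eq: "orb Q a = (\<lambda>s. a ^ (Q ^ s)) ` {..<olen Q a}"
proof
  show "orb Q a \<subseteq> (\<lambda>s. a ^ (Q ^ s)) ` {..<olen Q a}"
  proof
    fix b assume "b \<in> orb Q a"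
    then obtain s where "b = a ^ (Q ^ s)" unfolding orb_def by auto
    hence "b = a ^ (Q ^ (s mod olen Q a))" using olen_mod by simp
    moreover have "s mod olen Q a < olen Q a" using olen(1) by simp
    ultimately show "b \<in> (\<lambda>s. a ^ (Q ^ s)) ` {..<olen Q a}" by blast
  qed
qed (auto simp: orb_def)

lemma card_orb: "card (orb Q a) = olen Q a"
proof -
  have "inj_on (\<lambda>s. a ^ (Q ^ s)) {..<olen Q a}"
    by (rule inj_onI) (use olen_lt_eq in auto)
  thus ?thesis unfolding orb_eq by (simp add: card_image)
qed

lemma finite_orb: "finite (orb Q a)"
  unfolding orb_eq by simp

lemma self_in_orb: "a \<in> orb Q a"
  unfolding orb_def by (auto intro!: range_eqI[of _ _ 0])

lemma orb_frob: "b \<in> orb Q a \<Longrightarrow> b ^ Q \<in> orb Q a"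
proof -
  assume "b \<in> orb Q a"
  then obtain s where b: "b = a ^ (Q ^ s)" unfolding orb_def by auto
  have "b ^ Q = a ^ (Q ^ Suc s)" unfolding b by (simp add: power_mult[symmetric] mult.commute)
  thus ?thesis unfolding orb_def by (metis rangeI)
qed

lemma orb_per: "b \<in> orb Q a \<Longrightarrow> b ^ (Q ^ K) = b"
proof -
  assume "b \<in> orb Q a"
  then obtain s where b: "b = a ^ (Q ^ s)" unfolding orb_def by auto
  have "b ^ (Q ^ K) = a ^ (Q ^ (K + s))" unfolding b by (metis powQ_add add.commute)
  also have "\<dots> = (a ^ (Q ^ K)) ^ (Q ^ s)" by (rule powQ_add)
  finally show ?thesis using per b by simp
qed

lemma orb_sub: "b \<in> orb Q a \<Longrightarrow> orb Q b \<subseteq> orb Q a"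
proof
  fix c assume "b \<in> orb Q a" "c \<in> orb Q b"
  then obtain s t where "b = a ^ (Q ^ s)" "c = b ^ (Q ^ t)" unfolding orb_def by auto
  hence "c = a ^ (Q ^ (s + t))" by (simp add: powQ_add)
  thus "c \<in> orb Q a" unfolding orb_def by auto
qed

lemma in_orb_sym: "b \<in> orb Q a \<Longrightarrow> a \<in> orb Q b"
proof -
  assume "b \<in> orb Q a"
  then obtain s where b: "b = a ^ (Q ^ s)" unfolding orb_def by auto
  have "b ^ (Q ^ (olen Q a * s - s)) = a ^ (Q ^ (s + (olen Q a * s - s)))"
    unfolding b by (simp add: powQ_add)
  also have "s + (olen Q a * s - s) = olen Q a * s"
    using olen(1) by (simp add: add_diff_inverse_nat mult_le_mono1[of 1 "olen Q a" s, simplified])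
  also have "a ^ (Q ^ (olen Q a * s)) = a" by (rule olen_mult)
  finally show ?thesis unfolding orb_def by (metis rangeI)
qed

end

lemma orb_eq_if:
  fixes a b :: "'a::field"
  assumes "inj (\<lambda>x::'a::field. x ^ Q)" "a ^ (Q ^ K) = a" "K > 0" "b \<in> orb Q a"
  shows "orb Q b = orb Q a"
proof
  show "orb Q b \<subseteq> orb Q a" using orb_sub assms by blast
  have "b ^ (Q ^ K) = b" using orb_per assms by blast
  moreover have "a \<in> orb Q b" using in_orb_sym assms by blast
  ultimately show "orb Q a \<subseteq> orb Q b" using orb_sub assms by blast
qed

lemma orb_disj:
  fixes a b c :: "'a::field"
  assumes "inj (\<lambda>x::'a::field. x ^ Q)" "a ^ (Q ^ K) = a" "K > 0"
    "b ^ (Q ^ K') = b" "K' > 0" "c \<in> orb Q a" "c \<in> orb Q b"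
  shows "orb Q a = orb Q b"
  using orb_eq_if[OF assms(1-3,6)] orb_eq_if[OF assms(1,4,5,7)] by simp



lemma coeff_iter:
  assumes "(c::'a::field) ^ Q = c"
  shows "c ^ (Q ^ s) = c"
proof (induction s)
  case (Suc s)
  have "c ^ (Q ^ Suc s) = (c ^ Q) ^ (Q ^ s)" by (simp add: power_mult[symmetric])
  thus ?case using Suc assms by simp
qed simp

lemma poly_frobQ:
  fixes f :: "'a::field poly"
  assumes "CHAR('a) = p" "prime p" "Q = p ^ r" "\<forall>i. coeff f i ^ Q = coeff f i"
  shows "poly f (x ^ (Q ^ s)) = (poly f x) ^ (Q ^ s)"
proof -
  have e: "Q ^ s = p ^ (r * s)" using assms(3) by (simp add: power_mult)
  show ?thesis unfolding e
    by (rule poly_frob[OF assms(1,2)]) (metis coeff_iter assms(4) e)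
qed

lemma frob_inj:
  assumes "CHAR('a::field) = p" "prime p" "Q = p ^ r"
  shows "inj (\<lambda>x::'a. x ^ Q)"
  by (rule injI) (use pow_inj_char[OF assms(1,2)] assms(3) in blast)

definition orbpoly :: "nat \<Rightarrow> 'a::field \<Rightarrow> 'a poly" where
  "orbpoly Q a = (\<Prod>b\<in>orb Q a. [:-b, 1:])"

context
  fixes p r Q K :: nat and a :: "'a::{finite,field}"
  assumes ch: "CHAR('a) = p" and pr: "prime p" and Qd: "Q = p ^ r"
    and per: "a ^ (Q ^ K) = a" and K0: "K > 0"
begin

lemma inj_Q: "inj (\<lambda>x::'a. x ^ Q)" by (rule frob_inj[OF ch pr Qd])

lemma orbpoly_degree: "degree (orbpoly Q a) = olen Q a"
  unfolding orbpoly_def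
  by (subst degree_prod_eq_sum_degree) (auto simp: card_orb[OF inj_Q per K0])

lemma orbpoly_lead: "lead_coeff (orbpoly Q a) = 1"
  unfolding orbpoly_def lead_coeff_prod by simp

lemma orbpoly_nz: "orbpoly Q a \<noteq> 0"
  using orbpoly_lead by auto

lemma orbpoly_root: "poly (orbpoly Q a) x = 0 \<longleftrightarrow> x \<in> orb Q a"
  unfolding orbpoly_def poly_prod using finite_orb[OF inj_Q per K0] by auto

lemma orbpoly_coeffs: "coeff (orbpoly Q a) i ^ Q = coeff (orbpoly Q a) i"
proof -
  define l where "l = olen Q a"
  define B where "B = orb Q a"
  have Bne: "B \<noteq> {}" using self_in_orb[OF inj_Q per K0] B_def by auto
  have cardB: "card B = l" unfolding B_def l_def by (rule card_orb[OF inj_Q per K0])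
  have stab: "\<forall>b\<in>B. b ^ (p ^ r) \<in> B" using orb_frob[OF inj_Q per K0] Qd B_def by auto
  have eqv: "\<forall>b\<in>B. - ((b ^ (p ^ r)) ^ l) = (- (b ^ l)) ^ (p ^ r)"
    using minus_pow_char[OF ch pr] by (simp add: power_mult[symmetric] mult.commute)
  obtain R where R: "\<forall>i. coeff R i ^ (p ^ r) = coeff R i" "\<forall>b\<in>B. poly R b = - (b ^ l)"
      "degree R < card B"
    using equiv_interp[OF ch pr Bne stab, of "\<lambda>b. - (b ^ l)"] eqv by auto
  have "orbpoly Q a = monom 1 l + R"
  proof (rule poly_eqI_degree_lead_coeff[of _ l _ B])
    show "coeff (orbpoly Q a) l = coeff (monom 1 l + R) l"
      using orbpoly_lead orbpoly_degree R(3) cardB l_def by (simp add: coeff_eq_0)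
    show "l \<le> card B" using cardB by simp
    show "degree (orbpoly Q a) \<le> l" using orbpoly_degree l_def by simp
    show "degree (monom 1 l + R) \<le> l"
      using R(3) cardB by (intro degree_add_le) (auto simp: degree_monom_le)
    show "poly (orbpoly Q a) z = poly (monom 1 l + R) z" if "z \<in> B" for z
      using that R(2) orbpoly_root B_def by (simp add: poly_monom)
  qed
  hence "coeff (orbpoly Q a) i = coeff (monom 1 l) i + coeff R i" by simp
  moreover have "(coeff (monom 1 l) i :: 'a) ^ Q = coeff (monom 1 l) i"
    using Qd pr prime_gt_0_nat by (auto simp: coeff_monom)
  moreover have "coeff R i ^ Q = coeff R i" using R(1) Qd by simp
  ultimately show ?thesis using add_pow_char[OF ch pr, of _ _ r] Qd by simp
qed

lemma roots_ge_olen: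
  assumes "h \<noteq> 0" "\<forall>i. coeff h i ^ Q = coeff h i" "poly h a = 0"
  shows "olen Q a \<le> degree h"
proof -
  have "orb Q a \<subseteq> {x. poly h x = 0}"
  proof
    fix b assume "b \<in> orb Q a"
    then obtain s where "b = a ^ (Q ^ s)" unfolding orb_def by auto
    thus "b \<in> {x. poly h x = 0}" using poly_frobQ[OF ch pr Qd assms(2)] assms(3) pr
      by (simp add: prime_gt_0_nat Qd)
  qed
  hence "card (orb Q a) \<le> card {x. poly h x = 0}"
    by (intro card_mono poly_roots_finite assms(1))
  also have "\<dots> \<le> degree h" by (rule card_poly_roots_bound[OF assms(1)])
  finally show ?thesis using card_orb[OF inj_Q per K0] by simp
qed

lemma minpoly_eq: "minpoly_over (subfield_of_card Q) a = orbpoly Q a"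
  unfolding minpoly_over_def subfield_of_card_def
proof (rule the_equality)
  show "lead_coeff (orbpoly Q a) = 1 \<and> (\<forall>i. coeff (orbpoly Q a) i \<in> {x. x ^ Q = x}) \<and>
    poly (orbpoly Q a) a = 0 \<and>
    (\<forall>h. h \<noteq> 0 \<and> (\<forall>i. coeff h i \<in> {x. x ^ Q = x}) \<and> poly h a = 0 \<longrightarrow> degree (orbpoly Q a) \<le> degree h)"
  proof (intro conjI allI impI)
    show "lead_coeff (orbpoly Q a) = 1" by (rule orbpoly_lead)
    show "coeff (orbpoly Q a) i \<in> {x. x ^ Q = x}" for i using orbpoly_coeffs by simp
    show "poly (orbpoly Q a) a = 0" using orbpoly_root self_in_orb[OF inj_Q per K0] by simp
    fix h :: "'a poly"
    assume h: "h \<noteq> 0 \<and> (\<forall>i. coeff h i \<in> {x. x ^ Q = x}) \<and> poly h a = 0"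
    show "degree (orbpoly Q a) \<le> degree h"
      using roots_ge_olen[of h] h orbpoly_degree by simp
  qed
next
  fix g :: "'a poly"
  assume g: "lead_coeff g = 1 \<and> (\<forall>i. coeff g i \<in> {x. x ^ Q = x}) \<and> poly g a = 0 \<and>
    (\<forall>h. h \<noteq> 0 \<and> (\<forall>i. coeff h i \<in> {x. x ^ Q = x}) \<and> poly h a = 0 \<longrightarrow> degree g \<le> degree h)"
  have g0: "g \<noteq> 0" using g by auto
  have d1: "degree g \<le> olen Q a"
  proof -
    have "degree g \<le> degree (orbpoly Q a)"
      using g orbpoly_nz orbpoly_coeffs orbpoly_root self_in_orb[OF inj_Q per K0] by simp
    thus ?thesis using orbpoly_degree by simp
  qed
  have d2: "olen Q a \<le> degree g" using roots_ge_olen[OF g0] g by auto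
  have gz: "poly g b = 0" if "b \<in> orb Q a" for b
  proof -
    from that obtain s where "b = a ^ (Q ^ s)" unfolding orb_def by auto
    thus ?thesis using poly_frobQ[OF ch pr Qd, of g] g pr by (simp add: prime_gt_0_nat Qd)
  qed
  show "g = orbpoly Q a"
  proof (rule poly_eqI_degree_lead_coeff[of _ "olen Q a" _ "orb Q a"])
    show "coeff g (olen Q a) = coeff (orbpoly Q a) (olen Q a)"
      using g orbpoly_lead orbpoly_degree d1 d2 by simp
  qed (use d1 orbpoly_degree card_orb[OF inj_Q per K0] gz orbpoly_root in auto)
qed

end



lemma sum_split_lessThan:
  "(\<Sum>j<a + b. g j) = (\<Sum>j<a. g j) + (\<Sum>j<b. g (a + j :: nat))"
  by (induction b) (simp_all add: add.assoc)

lemma card_subfield: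
  fixes dummy :: "'a::{finite,field}"
  assumes ch: "CHAR('a) = p" and pr: "prime p" and Qd: "Q = p ^ r" and r0: "r > 0"
    and card: "card (UNIV::'a set) = Q ^ n" and mn: "m dvd n" and m0: "m > 0"
  shows "card {x::'a. x ^ (Q ^ m) = x} = Q ^ m"
proof -
  define N where "N = Q ^ m"
  define M where "M = Q ^ n"
  have p2: "p \<ge> 2" using pr prime_ge_2_nat by blast
  have N2: "N \<ge> 2"
  proof -
    have "p ^ 1 \<le> p ^ (r * m)" using p2 r0 m0 by (intro power_increasing) auto
    thus ?thesis using p2 by (simp add: N_def Qd power_mult)
  qed
  obtain t where t: "n = m * t" using mn by auto
  have MN: "M = N ^ t" by (simp add: M_def N_def t power_mult)
  have Npow: "N ^ j = p ^ (r * m * j)" for j by (simp add: N_def Qd power_mult)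
  define D :: "'a poly" where "D = monom 1 N - monom 1 1"
  have dvd: "D dvd monom 1 (N ^ j) - monom 1 1" for j
  proof (induction j)
    case 0 then show ?case by simp
  next
    case (Suc j)
    have "D ^ (N ^ j) = monom 1 N ^ (N ^ j) - monom 1 1 ^ (N ^ j)"
      unfolding D_def Npow by (rule diff_pow_char) (use ch pr in simp_all)
    also have "\<dots> = monom 1 (N ^ Suc j) - monom 1 (N ^ j)"
      by (simp add: monom_power)
    finally have e: "monom 1 (N ^ Suc j) - monom 1 1 = D ^ (N ^ j) + (monom 1 (N ^ j) - monom 1 1)"
      by simp
    have "D dvd D ^ (N ^ j)" using N2 by simp
    thus ?case unfolding e using Suc by (rule dvd_add)
  qed
  define A :: "'a poly" where "A = monom 1 M - monom 1 1"
  have degmon: "degree (monom (1::'a) L - monom 1 1) = L" if "L \<ge> 2" for L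
  proof (rule antisym)
    show "degree (monom (1::'a) L - monom 1 1) \<le> L"
      by (rule degree_diff_le) (use that in \<open>auto simp: degree_monom_le intro: order.trans[OF degree_monom_le]\<close>)
    show "L \<le> degree (monom (1::'a) L - monom 1 1)"
      by (rule le_degree) (use that in \<open>simp add: coeff_monom\<close>)
  qed
  have "card (UNIV::'a set) \<ge> 2"
  proof -
    have "{0, 1::'a} \<subseteq> UNIV" by simp
    hence "card {0, 1::'a} \<le> card (UNIV::'a set)" by (intro card_mono) auto
    thus ?thesis by simp
  qed
  hence "n > 0" using card by (cases n) auto
  hence t0: "t > 0" using t by auto
  have M2: "M \<ge> N"
  proof -
    have "N ^ 1 \<le> N ^ t" using t0 N2 by (intro power_increasing) auto
    thus ?thesis using MN by simp
  qed
  obtain H where H: "A = D * H" using dvd[of t] unfolding A_def MN by (auto elim: dvdE)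
  have degA: "degree A = M" unfolding A_def using degmon N2 M2 by simp
  have degD: "degree D = N" unfolding D_def using degmon N2 by simp
  have A0: "A \<noteq> 0" using degA N2 M2 by auto
  have H0: "H \<noteq> 0" using A0 H by auto
  have D0: "D \<noteq> 0" using A0 H by auto
  have degH: "degree H = M - N" using degree_mult_eq[OF D0 H0] H degA degD by simp
  have rootsD: "{x. poly D x = 0} = {x::'a. x ^ N = x}" unfolding D_def by (auto simp: poly_monom)
  have "UNIV \<subseteq> {x. poly D x = 0} \<union> {x. poly H x = 0}"
  proof
    fix x :: 'a
    have "poly A x = 0" unfolding A_def using pow_card_same[of x] card by (simp add: poly_monom M_def)
    thus "x \<in> {x. poly D x = 0} \<union> {x. poly H x = 0}" using H by simp
  qed
  hence "card (UNIV::'a set) \<le> card ({x. poly D x = 0} \<union> {x. poly H x = 0})"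
    by (intro card_mono) auto
  also have "\<dots> \<le> card {x. poly D x = 0} + card {x. poly H x = 0}" by (rule card_Un_le)
  also have "card {x. poly H x = 0} \<le> M - N" using card_poly_roots_bound[OF H0] degH by simp
  finally have ge: "N \<le> card {x. poly D x = 0}" using card M_def M2 by simp
  have le: "card {x. poly D x = 0} \<le> N" using card_poly_roots_bound[OF D0] degD by simp
  show ?thesis using ge le rootsD N_def by simp
qed

lemma tr_nonzero:
  fixes dummy :: "'a::{finite,field}"
  assumes ch: "CHAR('a) = p" and pr: "prime p" and Qd: "Q = p ^ r" and r0: "r > 0"
    and card: "card (UNIV::'a set) = Q ^ n" and mn: "m dvd n" and m0: "m > 0"
  shows "\<exists>y::'a. y ^ (Q ^ m) = y \<and> abs_tr p r m y \<noteq> 0"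
proof -
  define T :: "'a poly" where "T = (\<Sum>j<r*m. monom 1 (p ^ j))"
  have p2: "p \<ge> 2" using pr prime_ge_2_nat by blast
  have rm: "r * m > 0" using r0 m0 by simp
  have polyT: "poly T y = abs_tr p r m y" for y
    unfolding T_def abs_tr_def poly_sum by (simp add: poly_monom)
  have degT: "degree T \<le> p ^ (r * m - 1)"
    unfolding T_def
    by (rule degree_sum_le) (use p2 in \<open>auto intro!: order.trans[OF degree_monom_le] power_increasing\<close>)
  have "coeff T (p ^ (r * m - 1)) = (\<Sum>j<r*m. if p ^ j = p ^ (r * m - 1) then 1 else 0)"
    unfolding T_def coeff_sum by (simp add: coeff_monom)
  also have "\<dots> = (\<Sum>j<r*m. if j = r * m - 1 then 1 else 0)"
    using p2 by (intro sum.cong refl) (simp add: power_inject_exp)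
  also have "\<dots> = 1" using rm by simp
  finally have T0: "T \<noteq> 0" by auto
  have "card {y. poly T y = 0} \<le> p ^ (r * m - 1)"
    using card_poly_roots_bound[OF T0] degT by simp
  also have "\<dots> < p ^ (r * m)" using p2 rm by (intro power_strict_increasing) auto
  also have "\<dots> = card {x::'a. x ^ (Q ^ m) = x}"
    using card_subfield[OF assms] Qd by (simp add: power_mult)
  finally have "\<not> {x::'a. x ^ (Q ^ m) = x} \<subseteq> {y. poly T y = 0}"
    using card_mono[of "{y. poly T y = 0}" "{x::'a. x ^ (Q ^ m) = x}"] poly_roots_finite[OF T0] by auto
  thus ?thesis using polyT by auto
qed

context
  fixes p r :: nat
  assumes ch: "CHAR('a::field) = p" and pr: "prime p"
begin

lemma tr_add: "abs_tr p r k (x + y :: 'a) = abs_tr p r k x + abs_tr p r k y"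
  unfolding abs_tr_def by (simp add: add_pow_char[OF ch pr] sum.distrib)

lemma tr_sum: "abs_tr p r k (\<Sum>i\<in>A. f i :: 'a) = (\<Sum>i\<in>A. abs_tr p r k (f i))"
  unfolding abs_tr_def by (simp add: sum_pow_char[OF ch pr] sum.swap[of _ A])

lemma tr_zero: "abs_tr p r k (0::'a) = 0"
  unfolding abs_tr_def using pr prime_gt_0_nat by (simp add: power_0_left)

lemma tr_scal:
  assumes "(c::'a) ^ p = c"
  shows "abs_tr p r k (c * y) = c * abs_tr p r k y"
proof -
  have "c ^ (p ^ j) = c" for j
  proof (induction j)
    case (Suc j)
    have "c ^ (p ^ Suc j) = (c ^ p) ^ (p ^ j)" by (simp add: power_mult[symmetric] mult.commute)
    thus ?case using Suc assms by simp
  qed simp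
  thus ?thesis unfolding abs_tr_def by (simp add: power_mult_distrib sum_distrib_left)
qed

lemma tr_pow_p:
  assumes "(y::'a) ^ (p ^ (r * k)) = y"
  shows "abs_tr p r k (y ^ p) = abs_tr p r k y"
proof -
  have "abs_tr p r k (y ^ p) = (\<Sum>j<r*k. y ^ (p ^ Suc j))"
    unfolding abs_tr_def by (simp add: power_mult[symmetric] mult.commute)
  also have "\<dots> = (\<Sum>j<Suc (r*k). y ^ (p ^ j)) - y ^ (p ^ 0)"
    by (subst sum.lessThan_Suc_shift) simp
  also have "\<dots> = (\<Sum>j<r*k. y ^ (p ^ j))"
    using assms by simp
  finally show ?thesis unfolding abs_tr_def .
qed

lemma tr_pow_ps:
  assumes "(y::'a) ^ (p ^ (r * k)) = y"
  shows "abs_tr p r k (y ^ (p ^ s)) = abs_tr p r k y"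
proof (induction s)
  case (Suc s)
  have per: "(y ^ (p ^ s)) ^ (p ^ (r * k)) = y ^ (p ^ s)"
    using assms by (metis power_mult mult.commute)
  have "y ^ (p ^ Suc s) = (y ^ (p ^ s)) ^ p" by (simp add: power_mult[symmetric] mult.commute)
  thus ?case using tr_pow_p[OF per] Suc by simp
qed simp

lemma tr_in_Fp:
  assumes "(y::'a) ^ (p ^ (r * k)) = y"
  shows "(abs_tr p r k y) ^ p = abs_tr p r k y"
proof -
  have "(abs_tr p r k y) ^ (p ^ 1) = abs_tr p r k (y ^ (p ^ 1))"
    unfolding abs_tr_def sum_pow_char[OF ch pr]
    by (simp add: power_mult[symmetric] mult.commute)
  thus ?thesis using tr_pow_p[OF assms] by simp
qed

lemma tr_mult:
  assumes "(y::'a) ^ (p ^ (r * l)) = y"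
  shows "abs_tr p r (l * t) y = of_nat t * abs_tr p r l y"
proof (induction t)
  case 0 then show ?case by (simp add: abs_tr_def)
next
  case (Suc t)
  have perj: "y ^ (p ^ (r * l * t)) = y" for t
  proof (induction t)
    case (Suc t)
    have "y ^ (p ^ (r * l * Suc t)) = (y ^ (p ^ (r * l * t))) ^ (p ^ (r * l))"
      by (simp add: power_mult[symmetric] power_add[symmetric] algebra_simps)
    thus ?case using Suc assms by simp
  qed simp
  have "abs_tr p r (l * Suc t) y = (\<Sum>j<r * (l * t) + r * l. y ^ (p ^ j))"
    unfolding abs_tr_def by (simp add: algebra_simps)
  also have "\<dots> = abs_tr p r (l * t) y + (\<Sum>j<r * l. y ^ (p ^ (r * (l * t) + j)))"
    unfolding sum_split_lessThan abs_tr_def ..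
  also have "(\<Sum>j<r * l. y ^ (p ^ (r * (l * t) + j))) = abs_tr p r l y"
    unfolding abs_tr_def
  proof (intro sum.cong refl)
    fix j
    have "y ^ (p ^ (r * (l * t) + j)) = (y ^ (p ^ (r * l * t))) ^ (p ^ j)"
      by (simp add: power_add power_mult mult.assoc)
    thus "y ^ (p ^ (r * (l * t) + j)) = y ^ (p ^ j)" using perj by simp
  qed
  finally show ?case using Suc by (simp add: algebra_simps)
qed

end



definition Phi :: "nat \<Rightarrow> nat \<Rightarrow> (nat \<Rightarrow> int) \<Rightarrow> (nat \<Rightarrow> nat) \<Rightarrow> (nat \<Rightarrow> 'a::field) \<Rightarrow> 'a poly \<Rightarrow> 'a" where
  "Phi p r c k \<alpha> f = of_int (c 1) * abs_tr p r (k 1) (poly f (\<alpha> 1))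
     + of_int (c 2) * abs_tr p r (k 2) (poly f (\<alpha> 2))
     + of_int (c 3) * abs_tr p r (k 3) (poly f (\<alpha> 3))"

definition Fpoly :: "nat \<Rightarrow> 'a::field poly \<Rightarrow> bool" where
  "Fpoly q f \<longleftrightarrow> (\<forall>i. coeff f i ^ q = coeff f i)"

lemma three_classes:
  fixes a t :: "nat \<Rightarrow> 'a::comm_ring"
  assumes "\<forall>i j. Ob i = Ob j \<longrightarrow> t i = t j"
    and "\<forall>j\<in>{1,2,3::nat}. (if Ob 1 = Ob j then a 1 else 0) + (if Ob 2 = Ob j then a 2 else 0)
          + (if Ob 3 = Ob j then a 3 else 0) = 0"
  shows "a 1 * t 1 + a 2 * t 2 + a 3 * t 3 = 0"
proof -
  have W1: "(if Ob 1 = Ob 1 then a 1 else 0) + (if Ob 2 = Ob 1 then a 2 else 0) + (if Ob 3 = Ob 1 then a 3 else 0) = 0"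
    and W2: "(if Ob 1 = Ob 2 then a 1 else 0) + (if Ob 2 = Ob 2 then a 2 else 0) + (if Ob 3 = Ob 2 then a 3 else 0) = 0"
    and W3: "(if Ob 1 = Ob 3 then a 1 else 0) + (if Ob 2 = Ob 3 then a 2 else 0) + (if Ob 3 = Ob 3 then a 3 else 0) = 0"
    using assms(2) by auto
  show ?thesis
  proof (cases "Ob 1 = Ob 2")
    case T12: True
    show ?thesis
    proof (cases "Ob 1 = Ob 3")
      case True
      hence "t 2 = t 1" "t 3 = t 1" using T12 assms(1) by metis+
      moreover have "a 1 + a 2 + a 3 = 0" using W1 T12 True by simp
      ultimately show ?thesis by (metis distrib_right mult_zero_left)
    next
      case False
      hence "t 2 = t 1" using T12 assms(1) by metis
      moreover have "a 1 + a 2 = 0" using W1 T12 False by simp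
      moreover have "a 3 = 0" using W3 T12 False by (simp split: if_splits)
      ultimately show ?thesis by (metis add_0 distrib_right mult_zero_left add.right_neutral)
    qed
  next
    case F12: False
    show ?thesis
    proof (cases "Ob 1 = Ob 3")
      case True
      hence "t 3 = t 1" using assms(1) by metis
      moreover have "a 1 + a 3 = 0" using W1 F12 True by simp
      moreover have "a 2 = 0" using W2 F12 True by (simp split: if_splits)
      ultimately show ?thesis by (metis add.commute add.left_commute distrib_right mult_zero_left add.right_neutral)
    next
      case F13: False
      show ?thesis
      proof (cases "Ob 2 = Ob 3")
        case True
        hence "t 3 = t 2" using assms(1) by metis
        moreover have "a 1 = 0" using W1 F12 F13 by simp
        moreover have "a 2 + a 3 = 0" using W2 F12 True by simp
        ultimately show ?thesis by (metis add.assoc distrib_right mult_zero_left add_0)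
      next
        case False
        have "a 1 = 0" using W1 F12 F13 by simp
        moreover have "a 2 = 0" using W2 F12 False by (simp split: if_splits)
        moreover have "a 3 = 0" using W3 F13 False by (simp split: if_splits)
        ultimately show ?thesis by simp
      qed
    qed
  qed
qed

lemma powQ_mod:
  assumes "(x::'a::field) ^ (Q ^ L) = x"
  shows "x ^ (Q ^ a) = x ^ (Q ^ (a mod L))"
proof -
  have m: "x ^ (Q ^ (L * t)) = x" for t
  proof (induction t)
    case (Suc t)
    have "x ^ (Q ^ (L * Suc t)) = (x ^ (Q ^ (L * t))) ^ (Q ^ L)"
      by (metis powQ_add mult_Suc_right add.commute)
    thus ?case using Suc assms by simp
  qed simp
  have "a = L * (a div L) + a mod L" by simp
  hence "x ^ (Q ^ a) = (x ^ (Q ^ (L * (a div L)))) ^ (Q ^ (a mod L))"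
    by (metis powQ_add)
  thus ?thesis using m by simp
qed



locale setup3 =
  fixes p q r n d :: nat and k :: "nat \<Rightarrow> nat" and \<alpha> :: "nat \<Rightarrow> 'a::{finite,field}"
    and c :: "nat \<Rightarrow> int"
  assumes pr: "prime p" and r0: "r > 0" and qd: "q = p ^ r"
    and cardq: "card (UNIV :: 'a set) = q ^ n"
    and kpos: "\<forall>i\<in>{1,2,3}. k i > 0" and kn: "\<forall>i\<in>{1,2,3}. k i dvd n"
    and alph: "\<forall>i\<in>{1,2,3}. \<alpha> i \<in> subfield_of_card (q ^ k i)"
    and ksum: "k 1 + k 2 + k 3 < d"
begin

lemma ch: "CHAR('a) = p"
  using char_eq_p[OF pr, of "r * n"] cardq qd by (simp add: power_mult)

lemma injq: "inj (\<lambda>x::'a. x ^ q)" by (rule frob_inj[OF ch pr qd])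

lemma p0: "p > 0" using pr prime_gt_0_nat by blast

lemma per: "i \<in> {1,2,3} \<Longrightarrow> \<alpha> i ^ (q ^ k i) = \<alpha> i"
  using alph by (auto simp: subfield_of_card_def)

abbreviation l :: "nat \<Rightarrow> nat" where "l i \<equiv> olen q (\<alpha> i)"

lemma l_props:
  assumes "i \<in> {1,2,3}"
  shows "l i > 0" "\<alpha> i ^ (q ^ l i) = \<alpha> i" "l i dvd k i" "l i dvd n" "l i \<le> k i"
    "card (orb q (\<alpha> i)) = l i"
proof -
  have pe: "\<alpha> i ^ (q ^ k i) = \<alpha> i" "k i > 0" using per assms kpos by auto
  show "l i > 0" "\<alpha> i ^ (q ^ l i) = \<alpha> i" using olen[OF injq pe] by auto
  show d: "l i dvd k i" using olen_dvd[OF injq pe pe(1)] .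
  show "l i dvd n" using d kn assms by (meson dvd_trans)
  show "l i \<le> k i" using d pe(2) by (simp add: dvd_imp_le)
  show "card (orb q (\<alpha> i)) = l i" by (rule card_orb[OF injq pe])
qed

lemma poly_Fq:
  fixes f :: "'a poly"
  assumes "Fpoly q f"
  shows "poly f (x ^ (q ^ s)) = (poly f x) ^ (q ^ s)"
  using poly_frobQ[OF ch pr qd] assms unfolding Fpoly_def by blast

lemma val_per:
  assumes "Fpoly q f" "i \<in> {1,2,3}"
  shows "(poly f (\<alpha> i)) ^ (p ^ (r * l i)) = poly f (\<alpha> i)"
        "(poly f (\<alpha> i)) ^ (p ^ (r * k i)) = poly f (\<alpha> i)"
proof -
  have "(poly f (\<alpha> i)) ^ (q ^ l i) = poly f (\<alpha> i)"
    using poly_Fq[OF assms(1), of "\<alpha> i" "l i"] l_props(2)[OF assms(2)] by simp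
  thus "(poly f (\<alpha> i)) ^ (p ^ (r * l i)) = poly f (\<alpha> i)" by (simp add: qd power_mult)
  have "(poly f (\<alpha> i)) ^ (q ^ k i) = poly f (\<alpha> i)"
    using poly_Fq[OF assms(1), of "\<alpha> i" "k i"] per[OF assms(2)] by simp
  thus "(poly f (\<alpha> i)) ^ (p ^ (r * k i)) = poly f (\<alpha> i)" by (simp add: qd power_mult)
qed

lemma tr_k_l:
  assumes "Fpoly q f" "i \<in> {1,2,3}"
  shows "abs_tr p r (k i) (poly f (\<alpha> i)) = of_nat (k i div l i) * abs_tr p r (l i) (poly f (\<alpha> i))"
proof -
  have "k i = l i * (k i div l i)" using l_props(3)[OF assms(2)] by simp
  hence "abs_tr p r (k i) (poly f (\<alpha> i)) = abs_tr p r (l i * (k i div l i)) (poly f (\<alpha> i))" by simp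
  also have "\<dots> = of_nat (k i div l i) * abs_tr p r (l i) (poly f (\<alpha> i))"
    by (rule tr_mult[OF ch pr val_per(1)[OF assms]])
  finally show ?thesis .
qed

lemma orb_eq_tr:
  assumes "Fpoly q f" "i \<in> {1,2,3}" "j \<in> {1,2,3}" "orb q (\<alpha> i) = orb q (\<alpha> j)"
  shows "abs_tr p r (l i) (poly f (\<alpha> i)) = abs_tr p r (l j) (poly f (\<alpha> j))"
proof -
  have lij: "l i = l j" using l_props(6)[OF assms(2)] l_props(6)[OF assms(3)] assms(4) by simp
  have "\<alpha> j \<in> orb q (\<alpha> i)" using assms(4) self_in_orb[OF injq per[OF assms(3)]] kpos assms(3) by auto
  then obtain s where s: "\<alpha> j = \<alpha> i ^ (q ^ s)" unfolding orb_def by auto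
  have "poly f (\<alpha> j) = (poly f (\<alpha> i)) ^ (p ^ (r * s))"
    unfolding s poly_Fq[OF assms(1)] by (simp add: qd power_mult)
  hence "abs_tr p r (l i) (poly f (\<alpha> j)) = abs_tr p r (l i) (poly f (\<alpha> i))"
    using tr_pow_ps[OF ch pr val_per(1)[OF assms(1,2)]] by simp
  thus ?thesis using lij by simp
qed

definition a :: "nat \<Rightarrow> 'a" where "a i = of_int (c i) * of_nat (k i div l i)"

definition W :: "nat \<Rightarrow> 'a" where
  "W j = (if orb q (\<alpha> 1) = orb q (\<alpha> j) then a 1 else 0) + (if orb q (\<alpha> 2) = orb q (\<alpha> j) then a 2 else 0)
          + (if orb q (\<alpha> 3) = orb q (\<alpha> j) then a 3 else 0)"

lemma Phi_eq:
  assumes "Fpoly q f"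
  shows "Phi p r c k \<alpha> f = a 1 * abs_tr p r (l 1) (poly f (\<alpha> 1)) + a 2 * abs_tr p r (l 2) (poly f (\<alpha> 2))
     + a 3 * abs_tr p r (l 3) (poly f (\<alpha> 3))"
  unfolding Phi_def a_def using tr_k_l[OF assms] by (simp add: mult.assoc)

lemma W_zero_imp:
  assumes "\<forall>j\<in>{1,2,3}. W j = 0" "Fpoly q f"
  shows "Phi p r c k \<alpha> f = 0"
proof -
  define t where "t i = (if i \<in> {1,2,3::nat} then abs_tr p r (l i) (poly f (\<alpha> i)) else 0)" for i
  define Ob where "Ob i = (if i \<in> {1,2,3::nat} then orb q (\<alpha> i) else {})" for i
  have "a 1 * t 1 + a 2 * t 2 + a 3 * t 3 = 0"
  proof (rule three_classes[of Ob])
    show "\<forall>i j. Ob i = Ob j \<longrightarrow> t i = t j"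
    proof (intro allI impI)
      fix i j assume e: "Ob i = Ob j"
      show "t i = t j"
      proof (cases "i \<in> {1,2,3} \<and> j \<in> {1,2,3}")
        case True thus ?thesis using e orb_eq_tr[OF assms(2)] by (auto simp: t_def Ob_def)
      next
        case False
        have ne: "orb q (\<alpha> i) \<noteq> {}" if "i \<in> {1,2,3}" for i
          using self_in_orb[OF injq per[OF that]] kpos that by auto
        show ?thesis using False e ne unfolding t_def Ob_def by (auto split: if_splits)
      qed
    qed
    show "\<forall>j\<in>{1,2,3::nat}. (if Ob 1 = Ob j then a 1 else 0) + (if Ob 2 = Ob j then a 2 else 0)
          + (if Ob 3 = Ob j then a 3 else 0) = 0"
      using assms(1) unfolding W_def Ob_def by auto
  qed
  thus ?thesis unfolding Phi_eq[OF assms(2)] t_def by simp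
qed

end



context setup3
begin

lemma pe: "i \<in> {1,2,3} \<Longrightarrow> \<alpha> i ^ (q ^ k i) = \<alpha> i" "i \<in> {1,2,3} \<Longrightarrow> k i > 0"
  using per kpos by auto

lemma orb_same_if_meet:
  assumes "i \<in> {1,2,3}" "j \<in> {1,2,3}" "x \<in> orb q (\<alpha> i)" "x \<in> orb q (\<alpha> j)"
  shows "orb q (\<alpha> i) = orb q (\<alpha> j)"
  by (rule orb_disj[OF injq pe(1)[OF assms(1)] pe(2)[OF assms(1)] pe(1)[OF assms(2)] pe(2)[OF assms(2)] assms(3,4)])

lemma self_orb: "i \<in> {1,2,3} \<Longrightarrow> \<alpha> i \<in> orb q (\<alpha> i)"
  using self_in_orb[OF injq pe] pe(2) by blast

lemma W_imp:
  assumes all: "\<forall>f. Fpoly q f \<longrightarrow> Phi p r c k \<alpha> f = 0" and j: "j \<in> {1,2,3}"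
  shows "W j = 0"
proof -
  define Ob0 where "Ob0 = orb q (\<alpha> j)"
  define L0 where "L0 = l j"
  obtain y :: 'a where y: "y ^ (q ^ L0) = y" "abs_tr p r L0 y \<noteq> 0"
    using tr_nonzero[OF ch pr qd r0 cardq l_props(4)[OF j] l_props(1)[OF j]] L0_def by blast
  define B where "B = orb q (\<alpha> 1) \<union> orb q (\<alpha> 2) \<union> orb q (\<alpha> 3)"
  define \<phi> where "\<phi> b = (if b \<in> Ob0 then y ^ (q ^ (SOME s. b = \<alpha> j ^ (q ^ s))) else 0)" for b
  have phi_O: "\<phi> (\<alpha> j ^ (q ^ s0)) = y ^ (q ^ s0)" for s0
  proof -
    let ?b = "\<alpha> j ^ (q ^ s0)"
    have bO: "?b \<in> Ob0" unfolding Ob0_def orb_def by auto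
    define s where "s = (SOME s. ?b = \<alpha> j ^ (q ^ s))"
    have bs: "?b = \<alpha> j ^ (q ^ s)" unfolding s_def by (rule someI[of _ s0]) simp
    have "s mod L0 = s0 mod L0"
      using olen_eq_mod[OF injq pe(1)[OF j] pe(2)[OF j], of s s0] bs L0_def by simp
    hence "y ^ (q ^ s) = y ^ (q ^ s0)" using powQ_mod[OF y(1)] by metis
    thus ?thesis using bO unfolding \<phi>_def s_def by simp
  qed
  have Bne: "B \<noteq> {}" unfolding B_def using self_orb[of 1] by auto
  have stab: "\<forall>b\<in>B. b ^ (p ^ r) \<in> B"
    unfolding B_def qd[symmetric] using orb_frob[OF injq pe(1) pe(2)] by blast
  have eqv: "\<forall>b\<in>B. \<phi> (b ^ (p ^ r)) = (\<phi> b) ^ (p ^ r)"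
  proof
    fix b assume bB: "b \<in> B"
    show "\<phi> (b ^ (p ^ r)) = (\<phi> b) ^ (p ^ r)"
    proof (cases "b \<in> Ob0")
      case True
      then obtain s0 where b: "b = \<alpha> j ^ (q ^ s0)" unfolding Ob0_def orb_def by auto
      have "b ^ (p ^ r) = \<alpha> j ^ (q ^ Suc s0)" unfolding b qd[symmetric]
        by (simp add: power_mult[symmetric] mult.commute)
      hence "\<phi> (b ^ (p ^ r)) = y ^ (q ^ Suc s0)" using phi_O[of "Suc s0"] by simp
      also have "\<dots> = (y ^ (q ^ s0)) ^ q" by (simp add: power_mult[symmetric] mult.commute)
      finally show ?thesis using phi_O b qd by simp
    next
      case False
      from bB obtain i where i: "i \<in> {1,2,3}" "b \<in> orb q (\<alpha> i)" unfolding B_def by auto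
      have "b ^ q \<notin> Ob0"
      proof
        assume "b ^ q \<in> Ob0"
        moreover have "b ^ q \<in> orb q (\<alpha> i)" using orb_frob[OF injq pe(1)[OF i(1)] pe(2)[OF i(1)] i(2)] .
        ultimately have "orb q (\<alpha> i) = Ob0" using orb_same_if_meet[OF i(1) j] Ob0_def by blast
        thus False using False i(2) by simp
      qed
      thus ?thesis using False p0 unfolding \<phi>_def qd by simp
    qed
  qed
  obtain L where L: "\<forall>i. coeff L i ^ (p ^ r) = coeff L i" "\<forall>b\<in>B. poly L b = \<phi> b"
    using equiv_interp[OF ch pr Bne stab eqv] by blast
  have FL: "Fpoly q L" unfolding Fpoly_def qd using L(1) by simp
  have ti: "abs_tr p r (l i) (poly L (\<alpha> i)) = (if orb q (\<alpha> i) = Ob0 then abs_tr p r L0 y else 0)"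
    if i: "i \<in> {1,2,3}" for i
  proof -
    have aiB: "\<alpha> i \<in> B" unfolding B_def using self_orb[OF i] i by auto
    show ?thesis
    proof (cases "orb q (\<alpha> i) = Ob0")
      case True
      hence "\<alpha> i \<in> Ob0" using self_orb[OF i] by simp
      then obtain s0 where s0: "\<alpha> i = \<alpha> j ^ (q ^ s0)" unfolding Ob0_def orb_def by auto
      have "poly L (\<alpha> i) = y ^ (p ^ (r * s0))" using L(2) aiB phi_O s0 qd by (simp add: power_mult)
      moreover have "l i = L0" using l_props(6)[OF i] l_props(6)[OF j] True Ob0_def L0_def by simp
      moreover have "y ^ (p ^ (r * L0)) = y" using y(1) qd by (simp add: power_mult)
      ultimately show ?thesis using tr_pow_ps[OF ch pr] True by simp
    next
      case False
      have "\<alpha> i \<notin> Ob0" using False orb_same_if_meet[OF i j] self_orb[OF i] Ob0_def by blast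
      hence "poly L (\<alpha> i) = 0" using L(2) aiB unfolding \<phi>_def by simp
      thus ?thesis using False tr_zero[OF ch pr] by simp
    qed
  qed
  have "Phi p r c k \<alpha> L = W j * abs_tr p r L0 y"
    unfolding Phi_eq[OF FL] W_def using ti[of 1] ti[of 2] ti[of 3] Ob0_def
    by (simp add: distrib_right)
  thus ?thesis using all FL y(2) by simp
qed

end



definition Vset :: "nat \<Rightarrow> nat \<Rightarrow> nat \<Rightarrow> 'a::field poly set" where
  "Vset p q d = {g. degree g < d \<and> (\<forall>i. coeff g i \<in> subfield_of_card q) \<and>
      (\<forall>k. 1 \<le> k \<and> k \<le> d div p \<longrightarrow> coeff g (p * k) = 0)}"

context setup3
begin

lemma Phi_add: "Phi p r c k \<alpha> (f + g) = Phi p r c k \<alpha> f + Phi p r c k \<alpha> g"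
  unfolding Phi_def by (simp add: tr_add[OF ch pr] algebra_simps)

lemma Phi_zero: "Phi p r c k \<alpha> 0 = 0"
  unfolding Phi_def by (simp add: tr_zero[OF ch pr])

lemma Phi_sum: "Phi p r c k \<alpha> (\<Sum>i\<in>A. f i) = (\<Sum>i\<in>A. Phi p r c k \<alpha> (f i))"
  by (induction A rule: infinite_finite_induct) (simp_all add: Phi_zero Phi_add)

lemma Phi_smult:
  assumes "(z::'a) ^ p = z"
  shows "Phi p r c k \<alpha> (smult z f) = z * Phi p r c k \<alpha> f"
  unfolding Phi_def by (simp add: tr_scal[OF ch pr assms] algebra_simps)

lemma Fpoly_iff: "Fpoly q f \<longleftrightarrow> (\<forall>i. coeff f i \<in> subfield_of_card q)"
  unfolding Fpoly_def subfield_of_card_def by simp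

lemma proot:
  assumes "(a0::'a) ^ q = a0"
  shows "\<exists>b. b ^ q = b \<and> b ^ p = a0"
proof -
  define F where "F = {x::'a. x ^ q = x}"
  have inj: "inj_on (\<lambda>x::'a. x ^ p) F"
    using pow_inj_char[OF ch pr, of _ 1] by (auto intro: inj_onI)
  have sub: "(\<lambda>x. x ^ p) ` F \<subseteq> F"
  proof
    fix z assume "z \<in> (\<lambda>x. x ^ p) ` F"
    then obtain x where x: "x ^ q = x" "z = x ^ p" unfolding F_def by auto
    have "z ^ q = (x ^ q) ^ p" unfolding x(2) by (simp add: power_mult[symmetric] mult.commute)
    thus "z \<in> F" using x unfolding F_def by simp
  qed
  have "(\<lambda>x. x ^ p) ` F = F" by (rule endo_inj_surj[OF _ sub inj]) simp
  moreover have "a0 \<in> F" using assms F_def by simp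
  ultimately show ?thesis unfolding F_def by force
qed

lemma V_monom:
  assumes V: "\<forall>g\<in>Vset p q d. Phi p r c k \<alpha> g = 0"
  shows "j < d \<Longrightarrow> a0 ^ q = a0 \<Longrightarrow> Phi p r c k \<alpha> (monom a0 j) = 0"
proof (induction j arbitrary: a0 rule: less_induct)
  case (less j)
  show ?case
  proof (cases "j > 0 \<and> p dvd j")
    case False
    have "monom a0 j \<in> Vset p q d"
      unfolding Vset_def subfield_of_card_def
    proof (intro CollectI conjI allI impI)
      show "degree (monom a0 j) < d" using less(2) degree_monom_le order.strict_trans1 by blast
      show "coeff (monom a0 j) i ^ q = coeff (monom a0 j) i" for i
        using less(3) p0 qd by (auto simp: coeff_monom)
      fix kk assume "1 \<le> kk \<and> kk \<le> d div p"
      thus "coeff (monom a0 j) (p * kk) = 0" using False p0 by (auto simp: coeff_monom)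
    qed
    thus ?thesis using V by blast
  next
    case True
    then obtain j' where j': "j = p * j'" by auto
    have j'lt: "j' < j" using True j' prime_ge_2_nat[OF pr] by simp
    obtain b where b: "b ^ q = b" "b ^ p = a0" using proot[OF less(3)] by blast
    have Fb: "Fpoly q (monom b j')" unfolding Fpoly_def using b(1) p0 qd by (auto simp: coeff_monom)
    have "Phi p r c k \<alpha> (monom a0 j) = Phi p r c k \<alpha> (monom b j')"
    proof -
      have e: "poly (monom a0 j) x = (poly (monom b j') x) ^ p" for x
        unfolding j' poly_monom b(2)[symmetric] by (simp add: power_mult_distrib power_mult[symmetric] mult.commute)
      have "abs_tr p r (k i) (poly (monom a0 j) (\<alpha> i)) = abs_tr p r (k i) (poly (monom b j') (\<alpha> i))"
        if "i \<in> {1,2,3}" for i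
        unfolding e by (rule tr_pow_p[OF ch pr val_per(2)[OF Fb that]])
      thus ?thesis unfolding Phi_def by simp
    qed
    also have "\<dots> = 0" using less(1)[OF j'lt _ b(1)] j'lt less(2) by simp
    finally show ?thesis .
  qed
qed

lemma V_deg:
  assumes V: "\<forall>g\<in>Vset p q d. Phi p r c k \<alpha> g = 0" and f: "Fpoly q f" "degree f < d"
  shows "Phi p r c k \<alpha> f = 0"
proof -
  have "Phi p r c k \<alpha> f = (\<Sum>i\<le>degree f. Phi p r c k \<alpha> (monom (coeff f i) i))"
    by (subst poly_as_sum_of_monoms[symmetric, of f]) (rule Phi_sum)
  also have "\<dots> = 0"
    using V_monom[OF V] f unfolding Fpoly_def by (intro sum.neutral) auto
  finally show ?thesis .
qed

lemma V_all:
  assumes V: "\<forall>g\<in>Vset p q d. Phi p r c k \<alpha> g = 0" and f: "Fpoly q f"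
  shows "Phi p r c k \<alpha> f = 0"
proof -
  define B where "B = orb q (\<alpha> 1) \<union> orb q (\<alpha> 2) \<union> orb q (\<alpha> 3)"
  have Bne: "B \<noteq> {}" unfolding B_def using self_orb[of 1] by auto
  have stab: "\<forall>b\<in>B. b ^ (p ^ r) \<in> B"
    unfolding B_def qd[symmetric] using orb_frob[OF injq pe(1) pe(2)] by blast
  have eqv: "\<forall>b\<in>B. poly f (b ^ (p ^ r)) = (poly f b) ^ (p ^ r)"
    using poly_Fq[OF f, of _ 1] qd by simp
  obtain L where L: "\<forall>i. coeff L i ^ (p ^ r) = coeff L i" "\<forall>b\<in>B. poly L b = poly f b" "degree L < card B"
    using equiv_interp[OF ch pr Bne stab eqv] by blast
  have "card B \<le> card (orb q (\<alpha> 1)) + card (orb q (\<alpha> 2)) + card (orb q (\<alpha> 3))"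
    unfolding B_def using card_Un_le[of "orb q (\<alpha> 1) \<union> orb q (\<alpha> 2)" "orb q (\<alpha> 3)"]
      card_Un_le[of "orb q (\<alpha> 1)" "orb q (\<alpha> 2)"] by linarith
  also have "\<dots> \<le> k 1 + k 2 + k 3" using l_props(5,6)[of 1] l_props(5,6)[of 2] l_props(5,6)[of 3] by simp
  finally have "degree L < d" using L(3) ksum by simp
  moreover have FL: "Fpoly q L" unfolding Fpoly_def qd using L(1) by simp
  ultimately have "Phi p r c k \<alpha> L = 0" using V_deg[OF V] by simp
  moreover have "poly L (\<alpha> i) = poly f (\<alpha> i)" if "i \<in> {1,2,3}" for i
    using L(2) self_orb[OF that] that unfolding B_def by auto
  ultimately show ?thesis unfolding Phi_def by simp
qed

lemma main_equiv:
  "(\<forall>g\<in>Vset p q d. Phi p r c k \<alpha> g = 0) \<longleftrightarrow> (\<forall>j\<in>{1,2,3}. W j = 0)"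
proof
  assume "\<forall>g\<in>Vset p q d. Phi p r c k \<alpha> g = 0"
  hence "\<forall>f. Fpoly q f \<longrightarrow> Phi p r c k \<alpha> f = 0" using V_all by blast
  thus "\<forall>j\<in>{1,2,3}. W j = 0" using W_imp by blast
next
  assume "\<forall>j\<in>{1,2,3}. W j = 0"
  thus "\<forall>g\<in>Vset p q d. Phi p r c k \<alpha> g = 0"
    using W_zero_imp Fpoly_iff unfolding Vset_def by blast
qed

end



lemma finite_deg_lt: "finite {g :: 'a::{finite,zero} poly. degree g < d}"
proof -
  have "{g :: 'a poly. degree g < d} \<subseteq> Poly ` {xs. set xs \<subseteq> UNIV \<and> length xs \<le> d}"
  proof
    fix g :: "'a poly" assume g: "g \<in> {g. degree g < d}"
    have "length (coeffs g) \<le> d" using g by (cases "g = 0") (auto simp: length_coeffs)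
    thus "g \<in> Poly ` {xs. set xs \<subseteq> UNIV \<and> length xs \<le> d}" by (intro image_eqI[of _ _ "coeffs g"]) auto
  qed
  moreover have "finite (Poly ` {xs :: 'a list. set xs \<subseteq> UNIV \<and> length xs \<le> d})"
    by (intro finite_imageI finite_lists_length_le) simp
  ultimately show ?thesis by (rule finite_subset)
qed

locale setup4 = setup3 p q r n d k \<alpha> c
  for p q r n d k and \<alpha> :: "nat \<Rightarrow> 'a::{finite,field}" and c +
  fixes \<psi> :: "'a \<Rightarrow> complex"
  assumes psi: "nontriv_add_char p \<psi>" and d0: "d > 0" and pd: "\<not> p dvd d"
begin

lemma Fp_of_nat: "(of_nat j :: 'a) ^ p = of_nat j"
proof (induction j)
  case 0 then show ?case using p0 by (simp add: power_0_left)
next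
  case (Suc j)
  have "(of_nat (Suc j) :: 'a) ^ (p ^ 1) = (of_nat j + 1) ^ (p ^ 1)" by (simp add: add.commute)
  also have "\<dots> = of_nat j ^ (p ^ 1) + 1 ^ (p ^ 1)" by (rule add_pow_char[OF ch pr])
  finally show ?case using Suc by simp
qed

lemma Fp_of_int: "(of_int z :: 'a) ^ p = of_int z"
proof (cases "z \<ge> 0")
  case True
  hence "z = int (nat z)" by simp
  hence "(of_int z :: 'a) = of_nat (nat z)" by (metis of_int_of_nat_eq)
  thus ?thesis using Fp_of_nat by simp
next
  case False
  hence "z = - int (nat (- z))" by simp
  hence "(of_int z :: 'a) = - of_nat (nat (- z))" by (metis of_int_minus of_int_of_nat_eq)
  thus ?thesis using Fp_of_nat minus_pow_char[OF ch pr, of "of_nat (nat (- z)) :: 'a" 1] by simp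
qed

lemma Fp_add: "(x::'a) ^ p = x \<Longrightarrow> y ^ p = y \<Longrightarrow> (x + y) ^ p = x + y"
  using add_pow_char[OF ch pr, of x y 1] by simp

lemma Fp_mult: "(x::'a) ^ p = x \<Longrightarrow> y ^ p = y \<Longrightarrow> (x * y) ^ p = x * y"
  by (simp add: power_mult_distrib)

lemma Phi_Fp:
  assumes "Fpoly q f"
  shows "(Phi p r c k \<alpha> f) ^ p = Phi p r c k \<alpha> f"
proof -
  have t: "(abs_tr p r (k i) (poly f (\<alpha> i))) ^ p = abs_tr p r (k i) (poly f (\<alpha> i))" if "i \<in> {1,2,3}" for i
    by (rule tr_in_Fp[OF ch pr val_per(2)[OF assms that]])
  show ?thesis unfolding Phi_def
    by (intro Fp_add Fp_mult Fp_of_int t) auto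
qed

lemma psi0: "\<psi> 0 = 1"
proof -
  have z: "(0::'a) \<in> subfield_of_card p" unfolding subfield_of_card_def using p0 by (simp add: power_0_left)
  have "\<psi> 0 = \<psi> (0 + 0)" by simp
  also have "\<dots> = \<psi> 0 * \<psi> 0" using psi z unfolding nontriv_add_char_def by blast
  finally have "\<psi> 0 * (\<psi> 0 - 1) = 0" by (simp add: algebra_simps)
  moreover have "\<psi> 0 \<noteq> 0" using psi z unfolding nontriv_add_char_def by blast
  ultimately show ?thesis by simp
qed

lemma psi_add: "(x::'a) ^ p = x \<Longrightarrow> y ^ p = y \<Longrightarrow> \<psi> (x + y) = \<psi> x * \<psi> y"
  using psi unfolding nontriv_add_char_def subfield_of_card_def by blast

abbreviation Fq :: "'a set" where "Fq \<equiv> subfield_of_card q"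

lemma Fq_diff: "(x::'a) ^ q = x \<Longrightarrow> y ^ q = y \<Longrightarrow> (x - y) ^ q = x - y"
  using diff_pow_char[OF ch pr, of x y r] qd by simp

lemma Fq_add: "(x::'a) ^ q = x \<Longrightarrow> y ^ q = y \<Longrightarrow> (x + y) ^ q = x + y"
  using add_pow_char[OF ch pr, of x y r] qd by simp

lemma V_diff:
  fixes g h :: "'a poly"
  assumes "g \<in> Vset p q d" "h \<in> Vset p q d" shows "g - h \<in> Vset p q d"
proof -
  have "\<forall>i. (coeff g i - coeff h i) ^ q = coeff g i - coeff h i"
    using assms Fq_diff unfolding Vset_def subfield_of_card_def by blast
  thus ?thesis using assms unfolding Vset_def subfield_of_card_def
    by (auto intro!: degree_diff_less)
qed

lemma V_add:
  fixes g h :: "'a poly"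
  assumes "g \<in> Vset p q d" "h \<in> Vset p q d" shows "g + h \<in> Vset p q d"
proof -
  have "\<forall>i. (coeff g i + coeff h i) ^ q = coeff g i + coeff h i"
    using assms Fq_add unfolding Vset_def subfield_of_card_def by blast
  thus ?thesis using assms unfolding Vset_def subfield_of_card_def
    by (auto intro!: degree_add_less)
qed

lemma V_smult:
  fixes g :: "'a poly"
  assumes "g \<in> Vset p q d" "(w::'a) ^ p = w"
  shows "smult w g \<in> Vset p q d"
proof -
  have wq: "w ^ q = w"
  proof -
    have "w ^ (p ^ j) = w" for j
    proof (induction j)
      case (Suc j)
      have "w ^ (p ^ Suc j) = (w ^ p) ^ (p ^ j)" by (simp add: power_mult[symmetric] mult.commute)
      thus ?case using Suc assms(2) by simp
    qed simp
    thus ?thesis using qd by simp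
  qed
  show ?thesis using assms(1) wq unfolding Vset_def subfield_of_card_def
    by (auto simp: power_mult_distrib intro: le_less_trans[OF degree_smult_le])
qed

lemma V_zero: "(0::'a poly) \<in> Vset p q d"
  unfolding Vset_def subfield_of_card_def using d0 p0 qd by (simp add: power_0_left)

lemma finite_V: "finite (Vset p q d :: 'a poly set)"
proof -
  have "Vset p q d \<subseteq> {g :: 'a poly. degree g < d}" by (auto simp: Vset_def)
  moreover have "finite {g :: 'a poly. degree g < d}" by (rule finite_deg_lt)
  ultimately show ?thesis by (rule finite_subset)
qed

lemma V_Fpoly: "(g::'a poly) \<in> Vset p q d \<Longrightarrow> Fpoly q g"
  unfolding Vset_def Fpoly_iff by auto

lemma Fd'_eq: "Fd' p q d = (\<lambda>(a, g). monom a d + g) ` ((Fq - {0}) \<times> Vset p q d)"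
proof
  show "Fd' p q d \<subseteq> (\<lambda>(a, g). monom a d + g) ` ((Fq - {0}) \<times> Vset p q d)"
  proof
    fix f :: "'a poly" assume f: "f \<in> Fd' p q d"
    define a0 where "a0 = coeff f d"
    have fd: "degree f = d" using f unfolding Fd'_def by auto
    have "f \<noteq> 0" using fd d0 by auto
    hence "coeff f (degree f) \<noteq> 0" by simp
    hence a0: "a0 \<noteq> 0" using fd unfolding a0_def by simp
    have a0q: "a0 \<in> Fq" using f unfolding Fd'_def a0_def by auto
    have "f - monom a0 d \<in> Vset p q d"
      unfolding Vset_def
    proof (intro CollectI conjI allI impI)
      show "degree (f - monom a0 d) < d"
      proof (rule degree_lessI)
        show "f - monom a0 d \<noteq> 0 \<or> d > 0" using d0 by simp
        show "\<forall>k'\<ge>d. coeff (f - monom a0 d) k' = 0"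
          using fd by (auto simp: a0_def coeff_monom coeff_eq_0)
      qed
      show "coeff (f - monom a0 d) i \<in> Fq" for i
      proof -
        have cc: "coeff f i ^ q = coeff f i" using f unfolding Fd'_def subfield_of_card_def by auto
        have mm: "(coeff (monom a0 d) i) ^ q = coeff (monom a0 d) i"
          using a0q p0 qd by (auto simp: coeff_monom subfield_of_card_def power_0_left)
        show ?thesis using Fq_diff[OF cc mm] by (simp add: subfield_of_card_def)
      qed
      fix kk assume kk: "1 \<le> kk \<and> kk \<le> d div p"
      have "p * kk \<noteq> d" using pd by auto
      thus "coeff (f - monom a0 d) (p * kk) = 0" using f kk unfolding Fd'_def by (simp add: coeff_monom)
    qed
    thus "f \<in> (\<lambda>(a, g). monom a d + g) ` ((Fq - {0}) \<times> Vset p q d)"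
      using a0 a0q by (intro image_eqI[of _ _ "(a0, f - monom a0 d)"]) auto
  qed
  show "(\<lambda>(a, g). monom a d + g) ` ((Fq - {0}) \<times> Vset p q d) \<subseteq> Fd' p q d"
  proof
    fix f assume "f \<in> (\<lambda>(a, g). monom a d + g) ` ((Fq - {0}) \<times> Vset p q d)"
    then obtain a0 g where ag: "a0 \<in> Fq" "a0 \<noteq> 0" "g \<in> Vset p q d" "f = monom a0 d + g" by auto
    have dg: "degree g < d" using ag(3) unfolding Vset_def by auto
    have "degree f = d" unfolding ag(4) using dg ag(2) by (subst degree_add_eq_left) (simp_all add: degree_monom_eq)
    moreover have "coeff f i \<in> Fq" for i
    proof -
      have cc: "coeff g i ^ q = coeff g i" using ag unfolding Vset_def subfield_of_card_def by auto
      have mm: "(coeff (monom a0 d) i) ^ q = coeff (monom a0 d) i"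
        using ag p0 qd by (auto simp: coeff_monom subfield_of_card_def power_0_left)
      show ?thesis using Fq_add[OF mm cc] ag(4) by (simp add: subfield_of_card_def)
    qed
    moreover have "coeff f (p * kk) = 0" if "1 \<le> kk \<and> kk \<le> d div p" for kk
    proof -
      have "p * kk \<noteq> d" using pd by auto
      thus ?thesis using ag(3) that unfolding ag(4) Vset_def by (simp add: coeff_monom)
    qed
    ultimately show "f \<in> Fd' p q d" unfolding Fd'_def by auto
  qed
qed

lemma inj_split: "inj_on (\<lambda>(a, g). monom a d + g) ((Fq - {0}) \<times> Vset p q d)"
proof (rule inj_onI)
  fix x y assume x: "x \<in> (Fq - {0}) \<times> Vset p q d" and y: "y \<in> (Fq - {0}) \<times> Vset p q d"
    and e0: "(\<lambda>(a, g). monom a d + g) x = (\<lambda>(a, g). monom a d + g) y"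
  obtain a1 g1 where x': "x = (a1, g1)" by (cases x)
  obtain a2 g2 where y': "y = (a2, g2)" by (cases y)
  have e: "monom a1 d + g1 = monom a2 d + g2" using e0 x' y' by simp
  have dg: "degree g1 < d" "degree g2 < d" using x y x' y' unfolding Vset_def by auto
  have "coeff (monom a1 d + g1) d = coeff (monom a2 d + g2) d" using e by simp
  hence "a1 = a2" using dg by (simp add: coeff_eq_0)
  thus "x = y" using e x' y' by simp
qed

lemma V_char_sum:
  assumes "\<exists>g\<in>Vset p q d. Phi p r c k \<alpha> g \<noteq> 0"
  shows "(\<Sum>g\<in>Vset p q d. \<psi> (Phi p r c k \<alpha> g)) = 0"
proof -
  obtain g0 where g0: "g0 \<in> Vset p q d" "Phi p r c k \<alpha> g0 \<noteq> 0" using assms by blast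
  define z0 where "z0 = Phi p r c k \<alpha> g0"
  have z0p: "z0 ^ p = z0" unfolding z0_def by (rule Phi_Fp[OF V_Fpoly[OF g0(1)]])
  obtain x0 where x0: "x0 ^ p = x0" "\<psi> x0 \<noteq> 1"
    using psi unfolding nontriv_add_char_def subfield_of_card_def by blast
  define w where "w = x0 / z0"
  have wp: "w ^ p = w" unfolding w_def using x0(1) z0p by (simp add: power_divide)
  define g1 where "g1 = smult w g0"
  have g1V: "g1 \<in> Vset p q d" unfolding g1_def by (rule V_smult[OF g0(1) wp])
  have Phig1: "Phi p r c k \<alpha> g1 = x0"
    unfolding g1_def Phi_smult[OF wp] using g0(2) by (simp add: w_def z0_def)
  define S where "S = (\<Sum>g\<in>Vset p q d. \<psi> (Phi p r c k \<alpha> g))"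
  have "S = (\<Sum>g\<in>Vset p q d. \<psi> (Phi p r c k \<alpha> (g + g1)))"
    unfolding S_def
    by (rule sum.reindex_bij_witness[of _ "\<lambda>g. g + g1" "\<lambda>g. g - g1"])
       (auto intro: V_add V_diff g1V)
  also have "\<dots> = (\<Sum>g\<in>Vset p q d. \<psi> (Phi p r c k \<alpha> g) * \<psi> x0)"
  proof (intro sum.cong refl)
    fix g :: "'a poly" assume "g \<in> Vset p q d"
    thus "\<psi> (Phi p r c k \<alpha> (g + g1)) = \<psi> (Phi p r c k \<alpha> g) * \<psi> x0"
      using Phi_add psi_add[OF Phi_Fp[OF V_Fpoly] x0(1)] Phig1 by simp
  qed
  also have "\<dots> = S * \<psi> x0" unfolding S_def by (simp add: sum_distrib_right)
  finally have "S * (1 - \<psi> x0) = 0" by (simp add: algebra_simps)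
  thus ?thesis using x0(2) S_def by simp
qed

lemma avg_main:
  "avg_Fd' p q d (\<lambda>f. \<psi> (Phi p r c k \<alpha> f)) = (if \<forall>g\<in>Vset p q d. Phi p r c k \<alpha> g = 0 then 1 else 0)"
proof -
  define A where "A = (Fq - {0}) \<times> (Vset p q d :: 'a poly set)"
  define m where "m = (\<lambda>(a, g). monom a d + g :: 'a poly)"
  have finA: "finite A" unfolding A_def using finite_V by (intro finite_cartesian_product) auto
  have FA: "Fd' p q d = m ` A" unfolding A_def m_def by (rule Fd'_eq)
  have inj: "inj_on m A" unfolding A_def m_def by (rule inj_split)
  have monF: "Fpoly q (monom a0 d)" if "a0 \<in> Fq" for a0
    using that p0 qd unfolding Fpoly_def subfield_of_card_def by (auto simp: coeff_monom power_0_left)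
  have sumeq: "(\<Sum>f\<in>Fd' p q d. \<psi> (Phi p r c k \<alpha> f))
      = (\<Sum>a0\<in>Fq - {0}. \<psi> (Phi p r c k \<alpha> (monom a0 d))) * (\<Sum>g\<in>Vset p q d. \<psi> (Phi p r c k \<alpha> g))"
  proof -
    have "(\<Sum>f\<in>Fd' p q d. \<psi> (Phi p r c k \<alpha> f)) = (\<Sum>x\<in>A. \<psi> (Phi p r c k \<alpha> (m x)))"
      unfolding FA by (rule sum.reindex[OF inj, unfolded comp_def])
    also have "\<dots> = (\<Sum>x\<in>A. \<psi> (Phi p r c k \<alpha> (monom (fst x) d)) * \<psi> (Phi p r c k \<alpha> (snd x)))"
    proof (intro sum.cong refl)
      fix x assume "x \<in> A"
      hence x: "fst x \<in> Fq" "snd x \<in> Vset p q d" unfolding A_def by auto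
      show "\<psi> (Phi p r c k \<alpha> (m x)) = \<psi> (Phi p r c k \<alpha> (monom (fst x) d)) * \<psi> (Phi p r c k \<alpha> (snd x))"
        unfolding m_def using Phi_add psi_add[OF Phi_Fp[OF monF[OF x(1)]] Phi_Fp[OF V_Fpoly[OF x(2)]]]
        by (simp add: case_prod_beta)
    qed
    also have "\<dots> = (\<Sum>a0\<in>Fq - {0}. \<Sum>g\<in>Vset p q d. \<psi> (Phi p r c k \<alpha> (monom a0 d)) * \<psi> (Phi p r c k \<alpha> g))"
      unfolding A_def by (subst sum.cartesian_product) (simp add: case_prod_beta)
    also have "\<dots> = (\<Sum>a0\<in>Fq - {0}. \<psi> (Phi p r c k \<alpha> (monom a0 d))) * (\<Sum>g\<in>Vset p q d. \<psi> (Phi p r c k \<alpha> g))"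
      by (rule sum_product[symmetric])
    finally show ?thesis .
  qed
  show ?thesis
  proof (cases "\<forall>g\<in>Vset p q d. Phi p r c k \<alpha> g = 0")
    case True
    have m0: "Phi p r c k \<alpha> (monom a0 d) = 0" if "a0 \<in> Fq" for a0
      using V_all[OF True monF[OF that]] .
    have "(\<Sum>f\<in>Fd' p q d. \<psi> (Phi p r c k \<alpha> f)) = of_nat (card (Fq - {0})) * of_nat (card (Vset p q d :: 'a poly set))"
      unfolding sumeq using True m0 psi0 by simp
    also have "\<dots> = of_nat (card (Fd' p q d :: 'a poly set))"
    proof -
      have "card (Fd' p q d :: 'a poly set) = card A" unfolding FA using card_image[OF inj] .
      thus ?thesis unfolding A_def card_cartesian_product by simp
    qed
    finally have e: "(\<Sum>f\<in>Fd' p q d. \<psi> (Phi p r c k \<alpha> f)) = of_nat (card (Fd' p q d :: 'a poly set))" .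
    have "(1::'a) \<in> Fq - {0}" unfolding subfield_of_card_def by simp
    hence "A \<noteq> {}" unfolding A_def using V_zero by auto
    moreover have "card (Fd' p q d :: 'a poly set) = card A" unfolding FA using card_image[OF inj] .
    ultimately have "card (Fd' p q d :: 'a poly set) \<noteq> 0" using finA by simp
    thus ?thesis using True e unfolding avg_Fd'_def by simp
  next
    case False
    hence "(\<Sum>g\<in>Vset p q d. \<psi> (Phi p r c k \<alpha> g)) = 0" using V_char_sum by blast
    thus ?thesis using False unfolding avg_Fd'_def sumeq by simp
  qed
qed

end



lemma comb_core:
  fixes a b c :: int and D :: "int \<Rightarrow> bool"
  assumes Dadd: "\<And>u v. D u \<Longrightarrow> D v \<Longrightarrow> D (u + v)" and Dsub: "\<And>u v. D (u + v) \<Longrightarrow> D u \<Longrightarrow> D v"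
    and Da: "D a \<longleftrightarrow> P1" and Db: "D b \<longleftrightarrow> P2" and Dc: "D c \<longleftrightarrow> P3" and D0: "D 0"
    and t1: "E12 \<and> E23 \<longrightarrow> E13" and t2: "E12 \<and> E13 \<longrightarrow> E23" and t3: "E13 \<and> E23 \<longrightarrow> E12"
  shows "(D (a + (if E12 then b else 0) + (if E13 then c else 0)) \<and>
          D ((if E12 then a else 0) + b + (if E23 then c else 0)) \<and>
          D ((if E13 then a else 0) + (if E23 then b else 0) + c))
    \<longleftrightarrow> ((E12 \<and> E23 \<and> D (a + b + c) \<and> \<not> (P1 \<or> P2 \<or> P3))
      \<or> (E12 \<and> D (a + b) \<and> \<not> P1 \<and> \<not> P2 \<and> P3) \<or> (E13 \<and> D (a + c) \<and> \<not> P1 \<and> \<not> P3 \<and> P2)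
      \<or> (E23 \<and> D (b + c) \<and> \<not> P2 \<and> \<not> P3 \<and> P1) \<or> (P1 \<and> P2 \<and> P3))"
proof -
  have s1: "D (a + b + c) \<longleftrightarrow> D (a + b)" if "D c" using Dadd Dsub that by (metis add.commute)
  have s2: "D (a + b + c) \<longleftrightarrow> D (a + c)" if "D b" using Dadd Dsub that by (metis add.commute add.assoc)
  have s3: "D (a + b + c) \<longleftrightarrow> D (b + c)" if "D a" using Dadd Dsub that by (metis add.commute add.assoc)
  have s4: "D (a + b) \<longleftrightarrow> D b" if "D a" using Dadd Dsub that by (metis add.commute)
  have s5: "D (a + b) \<longleftrightarrow> D a" if "D b" using Dadd Dsub that by (metis add.commute)
  have s6: "D (a + c) \<longleftrightarrow> D c" if "D a" using Dadd Dsub that by (metis add.commute)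
  have s7: "D (a + c) \<longleftrightarrow> D a" if "D c" using Dadd Dsub that by (metis add.commute)
  have s8: "D (b + c) \<longleftrightarrow> D c" if "D b" using Dadd Dsub that by (metis add.commute)
  have s9: "D (b + c) \<longleftrightarrow> D b" if "D c" using Dadd Dsub that by (metis add.commute)
  show ?thesis
  proof (cases E12; cases E13; cases E23)
  qed (use t1 t2 t3 Da Db Dc s1 s2 s3 s4 s5 s6 s7 s8 s9 in \<open>simp_all add: add.commute add.left_commute; blast\<close>)+
qed



lemma perm3: "{j1, j2, j3} = {1, 2, 3::nat} \<longleftrightarrow>
   (j1 = 1 \<and> j2 = 2 \<and> j3 = 3) \<or> (j1 = 1 \<and> j2 = 3 \<and> j3 = 2) \<or> (j1 = 2 \<and> j2 = 1 \<and> j3 = 3) \<or>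
   (j1 = 2 \<and> j2 = 3 \<and> j3 = 1) \<or> (j1 = 3 \<and> j2 = 1 \<and> j3 = 2) \<or> (j1 = 3 \<and> j2 = 2 \<and> j3 = 1)"
proof
  assume h: "{j1, j2, j3} = {1, 2, 3::nat}"
  have m: "j1 \<in> {1,2,3}" "j2 \<in> {1,2,3}" "j3 \<in> {1,2,3}" using h by blast+
  have "1 \<in> {j1, j2, j3}" "2 \<in> {j1, j2, j3}" "3 \<in> {j1, j2, j3}" using h by auto
  thus "(j1 = 1 \<and> j2 = 2 \<and> j3 = 3) \<or> (j1 = 1 \<and> j2 = 3 \<and> j3 = 2) \<or> (j1 = 2 \<and> j2 = 1 \<and> j3 = 3) \<or>
   (j1 = 2 \<and> j2 = 3 \<and> j3 = 1) \<or> (j1 = 3 \<and> j2 = 1 \<and> j3 = 2) \<or> (j1 = 3 \<and> j2 = 2 \<and> j3 = 1)"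
    using m by auto
qed auto

lemma ex_perm3: "(\<exists>j1 j2 j3. {j1, j2, j3} = {1, 2, 3::nat} \<and> Tp j1 j2 j3) \<longleftrightarrow>
   Tp 1 2 3 \<or> Tp 1 3 2 \<or> Tp 2 1 3 \<or> Tp 2 3 1 \<or> Tp 3 1 2 \<or> Tp 3 2 1"
  unfolding perm3 by blast

lemma disj6: "(A \<or> B \<or> A \<or> C \<or> B \<or> C) \<longleftrightarrow> (A \<or> B \<or> C)" by blast

lemma div_simp2:
  assumes "U > 0"
  shows "(x * int (a * U) + y * int (b * U)) div int U = x * int a + y * int b"
proof -
  have "x * int (a * U) + y * int (b * U) = (x * int a + y * int b) * int U" by (simp add: algebra_simps)
  thus ?thesis using assms by simp
qed

lemma div_simp3:
  assumes "U > 0"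
  shows "(x * int (a * U) + y * int (b * U) + z * int (c * U)) div int U = x * int a + y * int b + z * int c"
proof -
  have "x * int (a * U) + y * int (b * U) + z * int (c * U) = (x * int a + y * int b + z * int c) * int U"
    by (simp add: algebra_simps)
  thus ?thesis using assms by simp
qed

lemma ndiv2: "U > 0 \<Longrightarrow> (a * U * (b * U)) div (U * U) = a * (b :: nat)"
  by (simp add: algebra_simps)

lemma ndiv3: "U > 0 \<Longrightarrow> (a * U * (b * U) * (c * U)) div (U * U * U) = a * b * (c :: nat)"
proof -
  assume "U > 0"
  have "a * U * (b * U) * (c * U) = (a * b * c) * (U * U * U)" by (simp add: algebra_simps)
  thus ?thesis using \<open>U > 0\<close> by simp
qed



theorem lemma8p1:
  fixes p q r n d :: nat
    and \<psi> :: "'a::{finite,field} \<Rightarrow> complex"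
    and h e :: "nat \<Rightarrow> int"
    and k :: "nat \<Rightarrow> nat"
    and \<alpha> :: "nat \<Rightarrow> 'a"
  assumes "prime p" and "odd p"
    and "r > 0" and "q = p ^ r"
    and "card (UNIV :: 'a set) = q ^ n"
    and "d > 0" and "\<not> p dvd d"
    and "nontriv_add_char p \<psi>"
    and "\<not> int p dvd h 1 * h 2 * h 3"
    and "\<forall>i\<in>{1,2,3}. e i \<in> {-1, 1}"
    and "\<forall>i\<in>{1,2,3}. k i > 0"
    and "k 1 + k 2 + k 3 < d"
    and "\<forall>i\<in>{1,2,3}. k i dvd n"
    and "\<forall>i\<in>{1,2,3}. \<alpha> i \<in> subfield_of_card (q ^ k i)"
  defines "g \<equiv> \<lambda>i. minpoly_over (subfield_of_card q) (\<alpha> i)"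
    and "u \<equiv> \<lambda>i. degree (minpoly_over (subfield_of_card q) (\<alpha> i))"
    and "m \<equiv> avg_Fd' p q d (\<lambda>f. \<psi> (
            of_int (e 1 * h 1) * abs_tr p r (k 1) (poly f (\<alpha> 1))
          + of_int (e 2 * h 2) * abs_tr p r (k 2) (poly f (\<alpha> 2))
          + of_int (e 3 * h 3) * abs_tr p r (k 3) (poly f (\<alpha> 3))))"
  shows "m = (if
      (g 1 = g 2 \<and> g 2 = g 3 \<and>
         int p dvd ((e 1 * h 1 * int (k 1) + e 2 * h 2 * int (k 2) + e 3 * h 3 * int (k 3)) div int (u 1)) \<and>
         \<not> p dvd ((k 1 * k 2 * k 3) div (u 1 * u 2 * u 3)))
    \<or> (\<exists>j1 j2 j3. {j1, j2, j3} = {1, 2, 3::nat} \<and> g j1 = g j2 \<and>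
         int p dvd ((e j1 * h j1 * int (k j1) + e j2 * h j2 * int (k j2)) div int (u j1)) \<and>
         \<not> p dvd ((k j1 * k j2) div (u j1 * u j2)) \<and>
         p dvd (k j3 div u j3))
    \<or> (\<forall>i\<in>{1,2,3}. p dvd (k i div u i))
    then 1 else 0)"
proof -
  define c where "c = (\<lambda>i. e i * h i)"
  have kn': "\<forall>i\<in>{1,2,3}. k i dvd n" using assms by blast
  interpret S: setup4 p q r n d k \<alpha> c \<psi>
    by unfold_locales (use assms in auto)
  have m_eq: "m = avg_Fd' p q d (\<lambda>f. \<psi> (Phi p r c k \<alpha> f))"
    unfolding m_def Phi_def c_def by simp
  hence m1: "m = (if \<forall>j\<in>{1,2,3}. S.W j = 0 then 1 else 0)"
    using S.avg_main S.main_equiv by simp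
  define L where "L i = olen q (\<alpha> i)" for i
  define Ob where "Ob i = orb q (\<alpha> i)" for i
  define \<kappa> where "\<kappa> i = k i div L i" for i
  define D where "D z = (int p dvd z)" for z
  define P where "P i = (p dvd \<kappa> i)" for i
  have Lp: "L i > 0" "k i = \<kappa> i * L i" if "i \<in> {1,2,3}" for i
    using S.l_props[OF that] unfolding L_def \<kappa>_def by auto
  have gi: "g i = orbpoly q (\<alpha> i)" if "i \<in> {1,2,3}" for i
    unfolding g_def by (rule minpoly_eq[OF S.ch S.pr S.qd S.pe(1)[OF that] S.pe(2)[OF that]])
  have ui: "u i = L i" if "i \<in> {1,2,3}" for i
    unfolding u_def L_def using minpoly_eq[OF S.ch S.pr S.qd S.pe(1)[OF that] S.pe(2)[OF that]]
      orbpoly_degree[OF S.ch S.pr S.qd S.pe(1)[OF that] S.pe(2)[OF that]] by simp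
  have gE: "g i = g j \<longleftrightarrow> Ob i = Ob j" if "i \<in> {1,2,3}" "j \<in> {1,2,3}" for i j
  proof
    assume "g i = g j"
    hence "\<forall>x. poly (orbpoly q (\<alpha> i)) x = 0 \<longleftrightarrow> poly (orbpoly q (\<alpha> j)) x = 0" using gi that by simp
    thus "Ob i = Ob j" unfolding Ob_def
      using orbpoly_root[OF S.ch S.pr S.qd S.pe(1)[OF that(1)] S.pe(2)[OF that(1)]]
        orbpoly_root[OF S.ch S.pr S.qd S.pe(1)[OF that(2)] S.pe(2)[OF that(2)]] by blast
  next
    assume "Ob i = Ob j"
    hence "orb q (\<alpha> i) = orb q (\<alpha> j)" unfolding Ob_def .
    thus "g i = g j" unfolding gi[OF that(1)] gi[OF that(2)] orbpoly_def by simp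
  qed
  have OL: "Ob i = Ob j \<Longrightarrow> L i = L j" if "i \<in> {1,2,3}" "j \<in> {1,2,3}" for i j
    using S.l_props(6)[OF that(1)] S.l_props(6)[OF that(2)] unfolding Ob_def L_def by metis
  have hnd: "\<not> D (c i)" if "i \<in> {1,2,3}" for i
  proof -
    have pi: "prime (int p)" using assms(1) by simp
    have "\<not> int p dvd h i"
    proof
      assume a: "int p dvd h i"
      have "int p dvd h 1 * h 2 * h 3" using that a by auto
      thus False using assms(9) by simp
    qed
    moreover have "e i = 1 \<or> e i = -1" using assms(10) that by auto
    ultimately show ?thesis unfolding D_def c_def by auto
  qed
  have DP: "D (c i * int (\<kappa> i)) \<longleftrightarrow> P i" if "i \<in> {1,2,3}" for i
  proof -
    have pi: "prime (int p)" using assms(1) by simp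
    show ?thesis using hnd[OF that] prime_dvd_mult_iff[OF pi] unfolding D_def P_def by auto
  qed
  have Dadd: "\<And>u v. D u \<Longrightarrow> D v \<Longrightarrow> D (u + v)" unfolding D_def by auto
  have Dsub: "\<And>u v. D (u + v) \<Longrightarrow> D u \<Longrightarrow> D v" unfolding D_def by (metis add_diff_cancel_left' dvd_diff)
  have D0: "D 0" unfolding D_def by simp
  define Z where "Z j = (if Ob 1 = Ob j then c 1 * int (\<kappa> 1) else 0) + (if Ob 2 = Ob j then c 2 * int (\<kappa> 2) else 0)
      + (if Ob 3 = Ob j then c 3 * int (\<kappa> 3) else 0)" for j
  have WZ: "S.W j = 0 \<longleftrightarrow> D (Z j)" for j
  proof -
    have "S.W j = of_int (Z j)"
      unfolding S.W_def S.a_def Z_def Ob_def \<kappa>_def L_def by simp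
    thus ?thesis unfolding D_def using of_int_eq_0_iff_char_dvd[where 'a='a] S.ch by simp
  qed
  define a1 where "a1 = c 1 * int (\<kappa> 1)"
  define a2 where "a2 = c 2 * int (\<kappa> 2)"
  define a3 where "a3 = c 3 * int (\<kappa> 3)"
  have lhs: "(\<forall>j\<in>{1,2,3}. S.W j = 0) \<longleftrightarrow>
         (D (a1 + (if Ob 1 = Ob 2 then a2 else 0) + (if Ob 1 = Ob 3 then a3 else 0)) \<and>
          D ((if Ob 1 = Ob 2 then a1 else 0) + a2 + (if Ob 2 = Ob 3 then a3 else 0)) \<and>
          D ((if Ob 1 = Ob 3 then a1 else 0) + (if Ob 2 = Ob 3 then a2 else 0) + a3))"
    unfolding WZ Z_def a1_def a2_def a3_def
    by (simp add: eq_commute[of "Ob 2" "Ob 1"] eq_commute[of "Ob 3" "Ob 1"] eq_commute[of "Ob 3" "Ob 2"])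
  have t: "Ob 1 = Ob 2 \<and> Ob 2 = Ob 3 \<longrightarrow> Ob 1 = Ob 3" "Ob 1 = Ob 2 \<and> Ob 1 = Ob 3 \<longrightarrow> Ob 2 = Ob 3"
    "Ob 1 = Ob 3 \<and> Ob 2 = Ob 3 \<longrightarrow> Ob 1 = Ob 2" by auto
  have DP1: "D a1 \<longleftrightarrow> P 1" using DP[of 1] unfolding a1_def by simp
  have DP2: "D a2 \<longleftrightarrow> P 2" using DP[of 2] unfolding a2_def by simp
  have DP3: "D a3 \<longleftrightarrow> P 3" using DP[of 3] unfolding a3_def by simp
  note core = comb_core[of D a1 "P 1" a2 "P 2" a3 "P 3" "Ob 1 = Ob 2" "Ob 2 = Ob 3" "Ob 1 = Ob 3",
      OF Dadd Dsub DP1 DP2 DP3 D0 t]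
  have ci: "e i * h i * int (k i) = c i * int (\<kappa> i * L i)" if "i \<in> {1,2,3}" for i
    using Lp[OF that] unfolding c_def by simp
  have partI: "(g 1 = g 2 \<and> g 2 = g 3 \<and>
         int p dvd ((e 1 * h 1 * int (k 1) + e 2 * h 2 * int (k 2) + e 3 * h 3 * int (k 3)) div int (u 1)) \<and>
         \<not> p dvd ((k 1 * k 2 * k 3) div (u 1 * u 2 * u 3)))
      \<longleftrightarrow> (Ob 1 = Ob 2 \<and> Ob 2 = Ob 3 \<and> D (a1 + a2 + a3) \<and> \<not> (P 1 \<or> P 2 \<or> P 3))"
  proof (cases "Ob 1 = Ob 2 \<and> Ob 2 = Ob 3")
    case True
    define U where "U = L 1"
    have LU: "L 1 = U" "L 2 = U" "L 3 = U" using OL True U_def by auto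
    have U0: "U > 0" using Lp(1)[of 1] U_def by simp
    have kU: "k 1 = \<kappa> 1 * U" "k 2 = \<kappa> 2 * U" "k 3 = \<kappa> 3 * U" using Lp(2) LU by auto
    have uU: "u 1 = U" "u 2 = U" "u 3 = U" using ui LU by auto
    have "(e 1 * h 1 * int (k 1) + e 2 * h 2 * int (k 2) + e 3 * h 3 * int (k 3)) div int (u 1) = a1 + a2 + a3"
      unfolding kU uU a1_def a2_def a3_def c_def by (rule div_simp3[OF U0])
    moreover have "(k 1 * k 2 * k 3) div (u 1 * u 2 * u 3) = \<kappa> 1 * \<kappa> 2 * \<kappa> 3"
      unfolding kU uU by (rule ndiv3[OF U0])
    moreover have "p dvd \<kappa> 1 * \<kappa> 2 * \<kappa> 3 \<longleftrightarrow> P 1 \<or> P 2 \<or> P 3"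
      unfolding P_def using prime_dvd_mult_iff[OF assms(1)] by auto
    ultimately show ?thesis using True gE unfolding D_def by auto
  next
    case False
    thus ?thesis using gE by auto
  qed
  define T where "T j1 j2 j3 \<longleftrightarrow> g j1 = g j2 \<and>
         int p dvd ((e j1 * h j1 * int (k j1) + e j2 * h j2 * int (k j2)) div int (u j1)) \<and>
         \<not> p dvd ((k j1 * k j2) div (u j1 * u j2)) \<and> p dvd (k j3 div u j3)" for j1 j2 j3
  have Tinst: "T j1 j2 j3 \<longleftrightarrow> (Ob j1 = Ob j2 \<and> D (c j1 * int (\<kappa> j1) + c j2 * int (\<kappa> j2)) \<and> \<not> P j1 \<and> \<not> P j2 \<and> P j3)"
    if j: "j1 \<in> {1,2,3}" "j2 \<in> {1,2,3}" "j3 \<in> {1,2,3}" for j1 j2 j3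
  proof (cases "Ob j1 = Ob j2")
    case True
    define U where "U = L j1"
    have LU: "L j1 = U" "L j2 = U" using OL[OF j(1,2)] True U_def by auto
    have U0: "U > 0" using Lp(1)[OF j(1)] U_def by simp
    have kU: "k j1 = \<kappa> j1 * U" "k j2 = \<kappa> j2 * U" using Lp(2) LU j by auto
    have uU: "u j1 = U" "u j2 = U" using ui LU j by auto
    have "(e j1 * h j1 * int (k j1) + e j2 * h j2 * int (k j2)) div int (u j1) = c j1 * int (\<kappa> j1) + c j2 * int (\<kappa> j2)"
      unfolding kU uU c_def by (rule div_simp2[OF U0])
    moreover have "(k j1 * k j2) div (u j1 * u j2) = \<kappa> j1 * \<kappa> j2"
      unfolding kU uU by (rule ndiv2[OF U0])
    moreover have "k j3 div u j3 = \<kappa> j3" using Lp[OF j(3)] ui[OF j(3)] by simp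
    moreover have "p dvd \<kappa> j1 * \<kappa> j2 \<longleftrightarrow> P j1 \<or> P j2"
      unfolding P_def using prime_dvd_mult_iff[OF assms(1)] by auto
    ultimately show ?thesis using True gE[OF j(1,2)] unfolding D_def T_def P_def by auto
  next
    case False
    thus ?thesis using gE[OF j(1,2)] unfolding T_def by auto
  qed
  have partII: "(\<exists>j1 j2 j3. {j1, j2, j3} = {1, 2, 3::nat} \<and> T j1 j2 j3) \<longleftrightarrow>
      ((Ob 1 = Ob 2 \<and> D (a1 + a2) \<and> \<not> P 1 \<and> \<not> P 2 \<and> P 3) \<or> (Ob 1 = Ob 3 \<and> D (a1 + a3) \<and> \<not> P 1 \<and> \<not> P 3 \<and> P 2)
      \<or> (Ob 2 = Ob 3 \<and> D (a2 + a3) \<and> \<not> P 2 \<and> \<not> P 3 \<and> P 1))"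
  proof -
    have "(\<exists>j1 j2 j3. {j1, j2, j3} = {1, 2, 3::nat} \<and> T j1 j2 j3) \<longleftrightarrow>
        T 1 2 3 \<or> T 1 3 2 \<or> T 2 1 3 \<or> T 2 3 1 \<or> T 3 1 2 \<or> T 3 2 1"
      by (rule ex_perm3)
    also have "\<dots> \<longleftrightarrow> ((Ob 1 = Ob 2 \<and> D (a1 + a2) \<and> \<not> P 1 \<and> \<not> P 2 \<and> P 3) \<or> (Ob 1 = Ob 3 \<and> D (a1 + a3) \<and> \<not> P 1 \<and> \<not> P 3 \<and> P 2)
      \<or> (Ob 2 = Ob 3 \<and> D (a2 + a3) \<and> \<not> P 2 \<and> \<not> P 3 \<and> P 1))"
    proof -
      have s12: "(Ob 2 = Ob 1) = (Ob 1 = Ob 2)" "(Ob 3 = Ob 1) = (Ob 1 = Ob 3)" "(Ob 3 = Ob 2) = (Ob 2 = Ob 3)"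
        by (rule eq_commute)+
      have T123': "T 1 2 3 \<longleftrightarrow> (Ob 1 = Ob 2 \<and> D (c 1 * int (\<kappa> 1) + c 2 * int (\<kappa> 2)) \<and> \<not> P 1 \<and> \<not> P 2 \<and> P 3)"
        by (rule Tinst) auto
      have T123e: "c 1 * int (\<kappa> 1) + c 2 * int (\<kappa> 2) = a1 + a2" by (simp add: a1_def a2_def a3_def)
      have T123: "T 1 2 3 \<longleftrightarrow> (Ob 1 = Ob 2 \<and> D (a1 + a2) \<and> \<not> P 1 \<and> \<not> P 2 \<and> P 3)"
        unfolding T123' T123e by (rule iffI; elim conjE; intro conjI; assumption)
      have T213': "T 2 1 3 \<longleftrightarrow> (Ob 2 = Ob 1 \<and> D (c 2 * int (\<kappa> 2) + c 1 * int (\<kappa> 1)) \<and> \<not> P 2 \<and> \<not> P 1 \<and> P 3)"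
        by (rule Tinst) auto
      have T213e: "c 2 * int (\<kappa> 2) + c 1 * int (\<kappa> 1) = a1 + a2" by (simp add: a1_def a2_def a3_def)
      have T213: "T 2 1 3 \<longleftrightarrow> (Ob 1 = Ob 2 \<and> D (a1 + a2) \<and> \<not> P 1 \<and> \<not> P 2 \<and> P 3)"
        unfolding T213' T213e s12 by (rule iffI; elim conjE; intro conjI; assumption)
      have T132': "T 1 3 2 \<longleftrightarrow> (Ob 1 = Ob 3 \<and> D (c 1 * int (\<kappa> 1) + c 3 * int (\<kappa> 3)) \<and> \<not> P 1 \<and> \<not> P 3 \<and> P 2)"
        by (rule Tinst) auto
      have T132e: "c 1 * int (\<kappa> 1) + c 3 * int (\<kappa> 3) = a1 + a3" by (simp add: a1_def a2_def a3_def)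
      have T132: "T 1 3 2 \<longleftrightarrow> (Ob 1 = Ob 3 \<and> D (a1 + a3) \<and> \<not> P 1 \<and> \<not> P 3 \<and> P 2)"
        unfolding T132' T132e by (rule iffI; elim conjE; intro conjI; assumption)
      have T312': "T 3 1 2 \<longleftrightarrow> (Ob 3 = Ob 1 \<and> D (c 3 * int (\<kappa> 3) + c 1 * int (\<kappa> 1)) \<and> \<not> P 3 \<and> \<not> P 1 \<and> P 2)"
        by (rule Tinst) auto
      have T312e: "c 3 * int (\<kappa> 3) + c 1 * int (\<kappa> 1) = a1 + a3" by (simp add: a1_def a2_def a3_def)
      have T312: "T 3 1 2 \<longleftrightarrow> (Ob 1 = Ob 3 \<and> D (a1 + a3) \<and> \<not> P 1 \<and> \<not> P 3 \<and> P 2)"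
        unfolding T312' T312e s12 by (rule iffI; elim conjE; intro conjI; assumption)
      have T231': "T 2 3 1 \<longleftrightarrow> (Ob 2 = Ob 3 \<and> D (c 2 * int (\<kappa> 2) + c 3 * int (\<kappa> 3)) \<and> \<not> P 2 \<and> \<not> P 3 \<and> P 1)"
        by (rule Tinst) auto
      have T231e: "c 2 * int (\<kappa> 2) + c 3 * int (\<kappa> 3) = a2 + a3" by (simp add: a1_def a2_def a3_def)
      have T231: "T 2 3 1 \<longleftrightarrow> (Ob 2 = Ob 3 \<and> D (a2 + a3) \<and> \<not> P 2 \<and> \<not> P 3 \<and> P 1)"
        unfolding T231' T231e by (rule iffI; elim conjE; intro conjI; assumption)
      have T321': "T 3 2 1 \<longleftrightarrow> (Ob 3 = Ob 2 \<and> D (c 3 * int (\<kappa> 3) + c 2 * int (\<kappa> 2)) \<and> \<not> P 3 \<and> \<not> P 2 \<and> P 1)"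
        by (rule Tinst) auto
      have T321e: "c 3 * int (\<kappa> 3) + c 2 * int (\<kappa> 2) = a2 + a3" by (simp add: a1_def a2_def a3_def)
      have T321: "T 3 2 1 \<longleftrightarrow> (Ob 2 = Ob 3 \<and> D (a2 + a3) \<and> \<not> P 2 \<and> \<not> P 3 \<and> P 1)"
        unfolding T321' T321e s12 by (rule iffI; elim conjE; intro conjI; assumption)
      show ?thesis unfolding T123 T213 T132 T312 T231 T321 by (rule disj6)
    qed
    finally show ?thesis .
  qed
  have partIII: "(\<forall>i\<in>{1,2,3}. p dvd (k i div u i)) \<longleftrightarrow> P 1 \<and> P 2 \<and> P 3"
  proof -
    have "k i div u i = \<kappa> i" if "i \<in> {1,2,3}" for i using Lp[OF that] ui[OF that] by simp
    thus ?thesis unfolding P_def by auto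
  qed
  have "(\<forall>j\<in>{1,2,3}. S.W j = 0) \<longleftrightarrow> ((g 1 = g 2 \<and> g 2 = g 3 \<and>
         int p dvd ((e 1 * h 1 * int (k 1) + e 2 * h 2 * int (k 2) + e 3 * h 3 * int (k 3)) div int (u 1)) \<and>
         \<not> p dvd ((k 1 * k 2 * k 3) div (u 1 * u 2 * u 3)))
    \<or> (\<exists>j1 j2 j3. {j1, j2, j3} = {1, 2, 3::nat} \<and> g j1 = g j2 \<and>
         int p dvd ((e j1 * h j1 * int (k j1) + e j2 * h j2 * int (k j2)) div int (u j1)) \<and>
         \<not> p dvd ((k j1 * k j2) div (u j1 * u j2)) \<and>
         p dvd (k j3 div u j3))
    \<or> (\<forall>i\<in>{1,2,3}. p dvd (k i div u i)))"
    unfolding lhs partI partIII partII[unfolded T_def] using core by (simp only: disj_assoc)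
  thus ?thesis using m1 by simp
qed


end
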